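(* Under the standing assumptions below, for every $\gamma\in\mathbb R^I$, $x_0\in\mathcal X$, $s_0\in\mathcal S$, the ex-ante lottery problem for $(\gamma,x_0,s_0)$ admits a maximizer $P^*\in\mathcal P(\tilde{\mathcal A}^\infty(x_0))$.
   Context: Setup. Let $\mathcal S$ be a finite set and $(s_t)_{t\ge0}$ a Markov chain on $\mathcal S$ with transition probabilities $\pi(s'|s)>0$ for all $s,s'\in\mathcal S$; for $s^t=(s_0,\dots,s_t)\in\mathcal S^{t+1}$, $\mathbb E_{s^t}$ denotes expectation over future shocks given $s^t$. Let $\mathcal A\subset\mathbb R^n$ be a finite set, $\mathcal X\subseteq\mathbb R^m$ a countable set, $\zeta:\mathcal X\times\mathcal A\times\mathcal S\to\mathcal X$, $p:\mathcal X\times\mathcal A\times\mathcal S\to\mathbb R$, $r,g^1,\dots,g^I$ bounded real functions on $\mathcal X\times\mathcal A\times\mathcal S$, $\bar g^i\in\mathbb R$, $\beta\in(0,1)$. A plan is $a=(a(s^t))_{t,s^t}$, $a(s^t)\in\mathcal A$, inducing $x(s^0)=x_0$, $x(s^{t+1})=\zeta(x(s^t),a(s^t),s_t)$. $\tilde{\mathcal A}(x,s)=\{a\in\mathcal A:p(x,a,s)\ge0\}$; $\tilde{\mathcal A}^\infty(x_0)$ is the set of plans with $a(s^t)\in\tilde{\mathcal A}(x(s^t),s_t)$ for all $t,s^t$. A plan is feasible for $(x_0,s_0)$ if it lies in $\tilde{\mathcal A}^\infty(x_0)$ and $\mathbb E_{s^t}\sum_{n\ge0}\beta^ng^i(x(s^{t+n}),a(s^{t+n}),s_{t+n})\ge\bar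 g^i$ for all $t,s^t,i$. Standing assumption: for every $(x_0,s_0)$ a feasible plan exists. Pre-action histories: $\mathcal H^t=\mathcal S^{t+1}\times\mathcal A^t$. Ex-ante lottery problem. Give $\tilde{\mathcal A}^\infty(x_0)$ the product topology and let $\mathcal P(\tilde{\mathcal A}^\infty(x_0))$ be the set of Borel probability measures on it; a random plan $a\sim P$ is drawn independently of the shocks. For $\gamma\in\mathbb R^I$, the ex-ante lottery problem is to maximize $\mathbb E^{a\sim P}_{s_0}\sum_{t\ge0}\beta^t\big(r(x(s^t),a(s^t),s_t)+\sum_i\gamma^ig^i(x(s^t),a(s^t),s_t)\big)$ over $P\in\mathcal P(\tilde{\mathcal A}^\infty(x_0))$ subject to: for all $t\ge0$, all $h^t=(s_0,\tilde a_0,\dots,s_{t-1},\tilde a_{t-1},s_t)\in\mathcal H^t$ and all $i$, $\mathbb E^{a\sim P}_{s^t}\Big[\mathbf 1\{(a(s^0),\dots,a(s^{t-1}))=(\tilde a_0,\dots,\tilde a_{t-1})\}\Big(\sum_{n\ge0}\beta^ng^i(x(s^{t+n}),a(s^{t+n}),s_{t+n})-\bar g^i\Big)\Big]\ge0$, where $s^t$ is the shock history contained in $h^t$ and the expectation is over $a\sim P$ and future shocks given $s^t$. *)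

theory Defs
  imports "HOL-Analysis.Analysis" "HOL-Probability.Probability"
begin

definition borel_of :: "'a topology \<Rightarrow> 'a measure" where
  "borel_of T = sigma (topspace T) {U. openin T U}"

text \<open>Shock histories s^t = (s_0,...,s_t) are nonempty lists [s_0,...,s_t].
  Plans are functions on the set of all shock histories.\<close>
definition hists :: "'s list set" where
  "hists = {hs. hs \<noteq> []}"

fun xrev :: "('x \<Rightarrow> 'a \<Rightarrow> 's \<Rightarrow> 'x) \<Rightarrow> 'x \<Rightarrow> ('s list \<Rightarrow> 'a) \<Rightarrow> 's list \<Rightarrow> 'x" where
  "xrev \<zeta> x0 a [] = x0"
| "xrev \<zeta> x0 a [s] = x0"
| "xrev \<zeta> x0 a (s # s' # rs) = \<zeta> (xrev \<zeta> x0 a (s' # rs)) (a (rev (s' # rs))) s'"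

text \<open>x(s^t) induced by plan a from x_0: x([s0]) = x0, x(s^{t+1}) = zeta(x(s^t), a(s^t), s_t).\<close>
definition xpath :: "('x \<Rightarrow> 'a \<Rightarrow> 's \<Rightarrow> 'x) \<Rightarrow> 'x \<Rightarrow> ('s list \<Rightarrow> 'a) \<Rightarrow> 's list \<Rightarrow> 'x" where
  "xpath \<zeta> x0 a hs = xrev \<zeta> x0 a (rev hs)"

text \<open>Probability of the continuation ys = (s_{t+1},...,s_{t+n}) from current shock s.
  pi s s' is the transition probability pi(s'|s).\<close>
fun path_prob :: "('s \<Rightarrow> 's \<Rightarrow> real) \<Rightarrow> 's \<Rightarrow> 's list \<Rightarrow> real" where
  "path_prob \<pi> s [] = 1"
| "path_prob \<pi> s (y # ys) = \<pi> s y * path_prob \<pi> y ys"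

definition cond_exp :: "('s::finite \<Rightarrow> 's \<Rightarrow> real) \<Rightarrow> 's list \<Rightarrow> nat \<Rightarrow> ('s list \<Rightarrow> real) \<Rightarrow> real" where
  "cond_exp \<pi> hs n F = (\<Sum>ys\<in>{ys. length ys = n}. path_prob \<pi> (last hs) ys * F (hs @ ys))"

definition disc_exp :: "('s::finite \<Rightarrow> 's \<Rightarrow> real) \<Rightarrow> real \<Rightarrow> 's list \<Rightarrow> ('s list \<Rightarrow> real) \<Rightarrow> real" where
  "disc_exp \<pi> \<beta> hs F = (\<Sum>n. \<beta> ^ n * cond_exp \<pi> hs n F)"

definition value_of :: "('s::finite \<Rightarrow> 's \<Rightarrow> real) \<Rightarrow> real \<Rightarrow> ('x \<Rightarrow> 'a \<Rightarrow> 's \<Rightarrow> 'x) \<Rightarrow> 'x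
    \<Rightarrow> ('x \<Rightarrow> 'a \<Rightarrow> 's \<Rightarrow> real) \<Rightarrow> ('s list \<Rightarrow> 'a) \<Rightarrow> 's list \<Rightarrow> real" where
  "value_of \<pi> \<beta> \<zeta> x0 f a hs = disc_exp \<pi> \<beta> hs (\<lambda>h. f (xpath \<zeta> x0 a h) (a h) (last h))"

definition Atil :: "'a set \<Rightarrow> ('x \<Rightarrow> 'a \<Rightarrow> 's \<Rightarrow> real) \<Rightarrow> 'x \<Rightarrow> 's \<Rightarrow> 'a set" where
  "Atil A p x s = {a\<in>A. p x a s \<ge> 0}"

definition Atil_inf :: "'a set \<Rightarrow> ('x \<Rightarrow> 'a \<Rightarrow> 's \<Rightarrow> 'x) \<Rightarrow> ('x \<Rightarrow> 'a \<Rightarrow> 's \<Rightarrow> real) \<Rightarrow> 'x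
    \<Rightarrow> ('s list \<Rightarrow> 'a) set" where
  "Atil_inf A \<zeta> p x0 = {a \<in> (\<Pi>\<^sub>E hs\<in>hists. A).
      \<forall>hs\<in>hists. a hs \<in> Atil A p (xpath \<zeta> x0 a hs) (last hs)}"

definition feasible_plan where
  "feasible_plan \<pi> \<beta> A \<zeta> p I g gbar x0 s0 a \<longleftrightarrow>
     a \<in> Atil_inf A \<zeta> p x0 \<and>
     (\<forall>hs\<in>hists. hd hs = s0 \<longrightarrow> (\<forall>i<I. value_of \<pi> \<beta> \<zeta> x0 (g i) a hs \<ge> gbar i))"

definition plan_lotteries :: "('a::topological_space) set \<Rightarrow> ('x \<Rightarrow> 'a \<Rightarrow> 's \<Rightarrow> 'x)
    \<Rightarrow> ('x \<Rightarrow> 'a \<Rightarrow> 's \<Rightarrow> real) \<Rightarrow> 'x \<Rightarrow> ('s list \<Rightarrow> 'a) measure set" where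
  "plan_lotteries A \<zeta> p x0 = {P. prob_space P \<and>
     space P = Atil_inf A \<zeta> p x0 \<and>
     sets P = sets (borel_of (subtopology (product_topology (\<lambda>_. top_of_set A) hists)
                                         (Atil_inf A \<zeta> p x0)))}"

text \<open>Constraints of the ex-ante lottery problem, for all h^t = (s^t, (a_0,...,a_{t-1})).\<close>
definition lottery_constraints where
  "lottery_constraints \<pi> \<beta> A \<zeta> I g gbar x0 P \<longleftrightarrow>
     (\<forall>hs\<in>hists. \<forall>as. length as = length hs - 1 \<longrightarrow> set as \<subseteq> A \<longrightarrow> (\<forall>i<I.
        (\<integral>a. (if (\<forall>k < length as. a (take (Suc k) hs) = as ! k) then 1 else 0)
              * (value_of \<pi> \<beta> \<zeta> x0 (g i) a hs - gbar i) \<partial>P) \<ge> 0))"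

definition lottery_objective where
  "lottery_objective \<pi> \<beta> \<zeta> r I g \<gamma> x0 s0 P =
     (\<integral>a. value_of \<pi> \<beta> \<zeta> x0 (\<lambda>x b s. r x b s + (\<Sum>i<I. \<gamma> i * g i x b s)) a [s0] \<partial>P)"

end

theory Submission
  imports Defs
begin

lemma xrev_cong:
  "(\<And>t u. rl = u @ t \<Longrightarrow> t \<noteq> [] \<Longrightarrow> a (rev t) = b (rev t)) \<Longrightarrow> xrev \<zeta> x0 a rl = xrev \<zeta> x0 b rl"
proof (induction \<zeta> x0 a rl rule: xrev.induct)
  case (3 \<zeta> x0 a s s' rs)
  have "xrev \<zeta> x0 a (s' # rs) = xrev \<zeta> x0 b (s' # rs)"
    by (rule 3(1)) (metis "3.prems" append_Cons)
  moreover have "a (rev (s' # rs)) = b (rev (s' # rs))"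
    using 3(2)[of "[s]" "s' # rs"] by simp
  ultimately show ?case by simp
qed auto

lemma xpath_cong:
  assumes "\<And>h'. h' \<noteq> [] \<Longrightarrow> (\<exists>u. h = h' @ u) \<Longrightarrow> a h' = b h'"
  shows "xpath \<zeta> x0 a h = xpath \<zeta> x0 b h"
  unfolding xpath_def
proof (rule xrev_cong)
  fix t u assume "rev h = u @ t" "t \<noteq> []"
  then have "h = rev t @ rev u" by (metis rev_append rev_rev_ident)
  then show "a (rev t) = b (rev t)" using assms \<open>t \<noteq> []\<close> by auto
qed

lemma xrev_in:
  assumes "x0 \<in> X" "\<And>x b s. x \<in> X \<Longrightarrow> b \<in> A \<Longrightarrow> \<zeta> x b s \<in> X"
    "\<And>t. t \<noteq> [] \<Longrightarrow> a (rev t) \<in> A"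
  shows "xrev \<zeta> x0 a rl \<in> X"
proof (induction rl)
  case (Cons s rl)
  then show ?case
  proof (cases rl)
    case (Cons s' rs)
    have "a (rev (s' # rs)) \<in> A" using assms(3) by blast
    then show ?thesis using Cons.IH assms(2) Cons by simp
  qed (use assms in auto)
qed (use assms in auto)

lemma path_prob_nonneg: "(\<And>s s'. \<pi> s s' \<ge> 0) \<Longrightarrow> path_prob \<pi> s ys \<ge> 0"
  by (induction ys arbitrary: s) auto

lemma lists_Suc_eq: "{ys::'s list. length ys = Suc n} = (\<lambda>(y,ys). y # ys) ` (UNIV \<times> {ys. length ys = n})"
  by (auto simp: length_Suc_conv image_iff)

lemma finite_lists_len: "finite {ys::'s::finite list. length ys = n}"
  using finite_lists_length_eq[of "UNIV::'s set" n] by simp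

lemma path_prob_sum:
  fixes \<pi> :: "'s::finite \<Rightarrow> 's \<Rightarrow> real"
  assumes "\<And>s. (\<Sum>s'\<in>UNIV. \<pi> s s') = 1"
  shows "(\<Sum>ys\<in>{ys. length ys = n}. path_prob \<pi> s ys) = 1"
proof (induction n arbitrary: s)
  case 0
  have "{ys::'s list. length ys = 0} = {[]}" by auto
  then show ?case by simp
next
  case (Suc n)
  have inj: "inj_on (\<lambda>(y,ys). y # ys) (UNIV \<times> {ys::'s list. length ys = n})"
    by (auto simp: inj_on_def)
  have "(\<Sum>ys\<in>{ys. length ys = Suc n}. path_prob \<pi> s ys)
      = (\<Sum>(y,ys)\<in>UNIV \<times> {ys. length ys = n}. \<pi> s y * path_prob \<pi> y ys)"
    unfolding lists_Suc_eq by (subst sum.reindex[OF inj]) (simp add: case_prod_unfold)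
  also have "\<dots> = (\<Sum>y\<in>UNIV. \<Sum>ys\<in>{ys. length ys = n}. \<pi> s y * path_prob \<pi> y ys)"
    by (rule sum.cartesian_product[symmetric])
  also have "\<dots> = (\<Sum>y\<in>UNIV. \<pi> s y)"
    by (simp add: sum_distrib_left[symmetric] Suc)
  finally show ?case using assms by simp
qed

lemma cond_exp_bound:
  fixes \<pi> :: "'s::finite \<Rightarrow> 's \<Rightarrow> real"
  assumes "\<And>s. (\<Sum>s'\<in>UNIV. \<pi> s s') = 1" "\<And>s s'. \<pi> s s' \<ge> 0"
    and "\<And>ys. length ys = n \<Longrightarrow> \<bar>F (hs @ ys)\<bar> \<le> C"
  shows "\<bar>cond_exp \<pi> hs n F\<bar> \<le> C"
proof -
  have "\<bar>cond_exp \<pi> hs n F\<bar> \<le> (\<Sum>ys\<in>{ys. length ys = n}. \<bar>path_prob \<pi> (last hs) ys * F (hs @ ys)\<bar>)"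
    unfolding cond_exp_def by (rule sum_abs)
  also have "\<dots> \<le> (\<Sum>ys\<in>{ys. length ys = n}. path_prob \<pi> (last hs) ys * C)"
    by (rule sum_mono) (auto simp: abs_mult path_prob_nonneg assms intro!: mult_left_mono)
  also have "\<dots> = C"
    by (simp add: sum_distrib_right[symmetric] path_prob_sum assms)
  finally show ?thesis .
qed

lemma disc_summable:
  fixes \<beta> :: real
  assumes "0 \<le> \<beta>" "\<beta> < 1" "\<And>n. \<bar>c n\<bar> \<le> C"
  shows "summable (\<lambda>n. \<beta> ^ n * c n)"
proof (rule summable_comparison_test[where g="\<lambda>n. C * \<beta> ^ n"])
  show "\<exists>N. \<forall>n\<ge>N. norm (\<beta> ^ n * c n) \<le> C * \<beta> ^ n"
  proof (intro exI allI impI)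
    fix n :: nat
    have "\<bar>c n\<bar> * \<beta> ^ n \<le> C * \<beta> ^ n" using assms by (intro mult_right_mono) auto
    then show "norm (\<beta> ^ n * c n) \<le> C * \<beta> ^ n" using assms by (simp add: abs_mult mult.commute)
  qed
  show "summable (\<lambda>n. C * \<beta> ^ n)" using assms by (intro summable_mult summable_geometric) auto
qed

lemma abs_suminf_le:
  fixes f g :: "nat \<Rightarrow> real"
  assumes fg: "\<And>n. \<bar>f n\<bar> \<le> g n" and sg: "summable g"
  shows "\<bar>suminf f\<bar> \<le> suminf g"
proof -
  have sf: "summable f"
    by (rule summable_comparison_test[OF _ sg]) (use fg in auto)
  have "suminf f \<le> suminf g"
    by (rule suminf_le[OF _ sf sg]) (use fg abs_le_iff in blast)
  moreover have "suminf (\<lambda>n. - f n) \<le> suminf g"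
    by (rule suminf_le[OF _ summable_minus[OF sf] sg]) (use fg abs_le_iff in blast)
  moreover have "suminf (\<lambda>n. - f n) = - suminf f" by (rule suminf_minus[OF sf])
  ultimately show ?thesis by linarith
qed

lemma disc_bound:
  fixes \<beta> :: real
  assumes "0 \<le> \<beta>" "\<beta> < 1" "\<And>n. \<bar>c n\<bar> \<le> C"
  shows "\<bar>\<Sum>n. \<beta> ^ n * c n\<bar> \<le> C / (1 - \<beta>)"
proof -
  have "\<bar>\<Sum>n. \<beta> ^ n * c n\<bar> \<le> (\<Sum>n. C * \<beta> ^ n)"
  proof (rule abs_suminf_le)
    fix n :: nat
    have "\<bar>c n\<bar> * \<beta> ^ n \<le> C * \<beta> ^ n" using assms by (intro mult_right_mono) auto
    then show "\<bar>\<beta> ^ n * c n\<bar> \<le> C * \<beta> ^ n" using assms by (simp add: abs_mult mult.commute)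
  next
    show "summable (\<lambda>n. C * \<beta> ^ n)" using assms by (intro summable_mult summable_geometric) auto
  qed
  also have "\<dots> = C / (1 - \<beta>)"
    using assms by (simp add: suminf_mult suminf_geometric)
  finally show ?thesis .
qed

lemma disc_tail:
  fixes \<beta> :: real
  assumes "0 \<le> \<beta>" "\<beta> < 1" "\<And>n. \<bar>c n\<bar> \<le> C" "\<And>n. \<bar>d n\<bar> \<le> C"
    and "\<And>n. n < M \<Longrightarrow> c n = d n"
  shows "\<bar>(\<Sum>n. \<beta> ^ n * c n) - (\<Sum>n. \<beta> ^ n * d n)\<bar> \<le> 2 * C * \<beta> ^ M / (1 - \<beta>)"
proof -
  define e where "e n = \<beta> ^ n * (c n - d n)" for n
  have sc: "summable (\<lambda>n. \<beta> ^ n * c n)" and sd: "summable (\<lambda>n. \<beta> ^ n * d n)"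
    using assms disc_summable by blast+
  have "(\<Sum>n. \<beta> ^ n * c n) - (\<Sum>n. \<beta> ^ n * d n) = suminf e"
    unfolding e_def using suminf_diff[OF sc sd] by (simp add: algebra_simps)
  moreover have se: "summable e" unfolding e_def using sc sd
    by (simp add: right_diff_distrib summable_diff)
  have "suminf e = (\<Sum>k. e (k + M)) + sum e {..<M}"
    using suminf_split_initial_segment[OF se, of M] by simp
  moreover have "sum e {..<M} = 0" by (auto simp: e_def assms(5) intro!: sum.neutral)
  moreover have "\<bar>\<Sum>k. e (k + M)\<bar> \<le> (\<Sum>k. (2 * C * \<beta> ^ M) * \<beta> ^ k)"
  proof (rule abs_suminf_le)
    fix k
    have "\<bar>c (k + M) - d (k + M)\<bar> \<le> 2 * C" using assms(3,4)[of "k+M"] by linarith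
    then have "\<beta> ^ (k + M) * \<bar>c (k + M) - d (k + M)\<bar> \<le> \<beta> ^ (k + M) * (2 * C)"
      using assms(1) by (intro mult_left_mono) auto
    then show "\<bar>e (k + M)\<bar> \<le> 2 * C * \<beta> ^ M * \<beta> ^ k"
      unfolding e_def using assms(1) by (simp add: abs_mult power_add mult_ac)
  next
    show "summable (\<lambda>k. 2 * C * \<beta> ^ M * \<beta> ^ k)" using assms by (intro summable_mult summable_geometric) auto
  qed
  moreover have "(\<Sum>k. (2 * C * \<beta> ^ M) * \<beta> ^ k) = 2 * C * \<beta> ^ M / (1 - \<beta>)"
    using assms by (simp add: suminf_mult suminf_geometric)
  ultimately show ?thesis by simp
qed


locale lot =
  fixes \<pi> :: "'s::finite \<Rightarrow> 's \<Rightarrow> real" and \<beta> :: real and A :: "'a::metric_space set"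
    and X :: "'x set" and \<zeta> :: "'x \<Rightarrow> 'a \<Rightarrow> 's \<Rightarrow> 'x" and p :: "'x \<Rightarrow> 'a \<Rightarrow> 's \<Rightarrow> real"
    and x0 :: 'x
  assumes pi_pos: "\<And>s s'. \<pi> s s' > 0"
    and pi_sum: "\<And>s. (\<Sum>s'\<in>UNIV. \<pi> s s') = 1"
    and A_fin: "finite A"
    and zeta_X: "\<And>x b s. x \<in> X \<Longrightarrow> b \<in> A \<Longrightarrow> \<zeta> x b s \<in> X"
    and beta0: "0 < \<beta>" and beta1: "\<beta> < 1"
    and x0_X: "x0 \<in> X"
    and Atil_ne: "\<And>x s. x \<in> X \<Longrightarrow> Atil A p x s \<noteq> {}"
begin

abbreviation "K \<equiv> Atil_inf A \<zeta> p x0"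
abbreviation "PT \<equiv> product_topology (\<lambda>_. top_of_set A) (hists :: 's list set)"
abbreviation "TT \<equiv> subtopology PT K"

definition fuc :: "(('s list \<Rightarrow> 'a) \<Rightarrow> real) \<Rightarrow> bool" where
  "fuc f \<longleftrightarrow> (\<forall>\<epsilon>>0. \<exists>N. finite N \<and> (\<forall>a\<in>K. \<forall>b\<in>K. (\<forall>h\<in>N. a h = b h) \<longrightarrow> \<bar>f a - f b\<bar> \<le> \<epsilon>))"

lemma A_ne: "A \<noteq> {}"
  using Atil_ne[OF x0_X] by (auto simp: Atil_def)

lemma K_PiE: "K \<subseteq> Pi\<^sub>E hists (\<lambda>_. A)"
  unfolding Atil_inf_def by auto

lemma K_A: "a \<in> K \<Longrightarrow> h \<in> hists \<Longrightarrow> a h \<in> A"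
  using K_PiE by blast

lemma K_undef: "a \<in> K \<Longrightarrow> h \<notin> hists \<Longrightarrow> a h = undefined"
  using K_PiE by blast

lemma K_agree: "a \<in> K \<Longrightarrow> b \<in> K \<Longrightarrow> (\<forall>h\<in>N. a h = b h) \<longleftrightarrow> (\<forall>h\<in>N \<inter> hists. a h = b h)"
proof -
  assume "a \<in> K" "b \<in> K"
  then have "h \<notin> hists \<Longrightarrow> a h = b h" for h using K_undef by metis
  then show ?thesis by blast
qed

lemma xpath_X: "(\<And>h. h \<in> hists \<Longrightarrow> a h \<in> A) \<Longrightarrow> xpath \<zeta> x0 a h \<in> X"
  unfolding xpath_def by (rule xrev_in[OF x0_X zeta_X]) (auto simp: hists_def)

lemma pi_nonneg: "\<pi> s s' \<ge> 0"
  using pi_pos[of s s'] by simp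

lemma value_bound:
  assumes f: "\<forall>x\<in>X. \<forall>b\<in>A. \<forall>s. \<bar>f x b s\<bar> \<le> C" and a: "\<And>h. h \<in> hists \<Longrightarrow> a h \<in> A"
    and hs: "hs \<in> hists"
  shows "\<bar>value_of \<pi> \<beta> \<zeta> x0 f a hs\<bar> \<le> C / (1 - \<beta>)"
  unfolding value_of_def disc_exp_def
proof (rule disc_bound)
  fix n
  show "\<bar>cond_exp \<pi> hs n (\<lambda>h. f (xpath \<zeta> x0 a h) (a h) (last h))\<bar> \<le> C"
  proof (rule cond_exp_bound[OF pi_sum pi_nonneg])
    fix ys :: "'s list"
    have "hs @ ys \<in> hists" using hs by (auto simp: hists_def)
    then show "\<bar>f (xpath \<zeta> x0 a (hs @ ys)) (a (hs @ ys)) (last (hs @ ys))\<bar> \<le> C"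
      using f xpath_X[of a "hs @ ys"] a by blast
  qed
qed (use beta0 beta1 in auto)

lemma C_nonneg:
  fixes f :: "'x \<Rightarrow> 'a \<Rightarrow> 's \<Rightarrow> real" and C :: real
  assumes f: "\<forall>x\<in>X. \<forall>b\<in>A. \<forall>s. \<bar>f x b s\<bar> \<le> C"
  shows "C \<ge> 0"
proof -
  obtain b where "b \<in> A" using A_ne by blast
  then have "\<bar>f x0 b undefined\<bar> \<le> C" using f x0_X by blast
  then show ?thesis using abs_ge_zero[of "f x0 b undefined"] by linarith
qed

lemma value_fuc:
  assumes f: "\<forall>x\<in>X. \<forall>b\<in>A. \<forall>s. \<bar>f x b s\<bar> \<le> C" and hs: "hs \<in> hists"
  shows "fuc (\<lambda>a. value_of \<pi> \<beta> \<zeta> x0 f a hs)"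
  unfolding fuc_def
proof (intro allI impI)
  fix \<epsilon> :: real assume "\<epsilon> > 0"
  have C0: "C \<ge> 0" using C_nonneg[OF f] .
  obtain M where M: "\<beta> ^ M < \<epsilon> * (1 - \<beta>) / (2 * C + 1)"
    using real_arch_pow_inv[of "\<epsilon> * (1 - \<beta>) / (2 * C + 1)" \<beta>] \<open>\<epsilon> > 0\<close> beta1 C0 by auto
  have "(2 * C + 1) * \<beta> ^ M < \<epsilon> * (1 - \<beta>)"
    using M C0 by (simp add: field_simps)
  moreover have "2 * C * \<beta> ^ M \<le> (2 * C + 1) * \<beta> ^ M" using beta0 by simp
  ultimately have eps: "2 * C * \<beta> ^ M / (1 - \<beta>) \<le> \<epsilon>"
    using beta1 by (simp add: field_simps)
  define N where "N = {h::'s list. set h \<subseteq> UNIV \<and> length h \<le> length hs + M}"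
  have "finite N" unfolding N_def by (rule finite_lists_length_le) simp
  moreover have "\<forall>a\<in>K. \<forall>b\<in>K. (\<forall>h\<in>N. a h = b h) \<longrightarrow>
      \<bar>value_of \<pi> \<beta> \<zeta> x0 f a hs - value_of \<pi> \<beta> \<zeta> x0 f b hs\<bar> \<le> \<epsilon>"
  proof (intro ballI impI)
    fix a b assume a: "a \<in> K" and b: "b \<in> K" and ab: "\<forall>h\<in>N. a h = b h"
    define u where "u c h = f (xpath \<zeta> x0 c h) (c h) (last h)" for c h
    have bnd: "\<bar>cond_exp \<pi> hs n (u c)\<bar> \<le> C" if "c \<in> K" for c n
    proof (rule cond_exp_bound[OF pi_sum pi_nonneg])
      fix ys :: "'s list"
      have "hs @ ys \<in> hists" using hs by (auto simp: hists_def)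
      then show "\<bar>u c (hs @ ys)\<bar> \<le> C"
        unfolding u_def using f xpath_X[of c "hs @ ys"] K_A[OF that] by blast
    qed
    have eq: "cond_exp \<pi> hs n (u a) = cond_exp \<pi> hs n (u b)" if "n < M" for n
      unfolding cond_exp_def
    proof (rule sum.cong[OF refl])
      fix ys :: "'s list" assume "ys \<in> {ys. length ys = n}"
      then have len: "length (hs @ ys) \<le> length hs + M" using that by simp
      have "xpath \<zeta> x0 a (hs @ ys) = xpath \<zeta> x0 b (hs @ ys)"
      proof (rule xpath_cong)
        fix h' assume "\<exists>u. hs @ ys = h' @ u"
        then have "length h' \<le> length hs + M" using len by (metis le_trans length_append le_add1)
        then show "a h' = b h'" using ab by (auto simp: N_def)
      qed
      moreover have "a (hs @ ys) = b (hs @ ys)" using ab len by (auto simp: N_def)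
      ultimately show "path_prob \<pi> (last hs) ys * u a (hs @ ys) = path_prob \<pi> (last hs) ys * u b (hs @ ys)"
        by (simp add: u_def)
    qed
    have "\<bar>value_of \<pi> \<beta> \<zeta> x0 f a hs - value_of \<pi> \<beta> \<zeta> x0 f b hs\<bar> \<le> 2 * C * \<beta> ^ M / (1 - \<beta>)"
      unfolding value_of_def disc_exp_def u_def[symmetric]
      by (rule disc_tail) (use beta0 beta1 bnd a b eq in auto)
    then show "\<bar>value_of \<pi> \<beta> \<zeta> x0 f a hs - value_of \<pi> \<beta> \<zeta> x0 f b hs\<bar> \<le> \<epsilon>"
      using eps by linarith
  qed
  ultimately show "\<exists>N. finite N \<and> (\<forall>a\<in>K. \<forall>b\<in>K. (\<forall>h\<in>N. a h = b h) \<longrightarrow>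
      \<bar>value_of \<pi> \<beta> \<zeta> x0 f a hs - value_of \<pi> \<beta> \<zeta> x0 f b hs\<bar> \<le> \<epsilon>)" by blast
qed


lemma topspace_TT: "topspace TT = K"
  using K_PiE by (auto simp: topspace_subtopology topspace_product_topology)

lemma singleton_openin: "b \<in> A \<Longrightarrow> openin (top_of_set A) {b}"
  unfolding openin_subtopology
proof (intro exI conjI)
  assume "b \<in> A"
  show "openin euclidean (- (A - {b}))"
  proof -
    have "closed (A - {b})" using A_fin by (intro finite_imp_closed) auto
    then show ?thesis by (simp only: open_openin[symmetric] open_Compl)
  qed
  show "{b} = - (A - {b}) \<inter> A" using \<open>b \<in> A\<close> by auto
qed

definition cyl :: "('s list \<Rightarrow> 'a) \<Rightarrow> 's list set \<Rightarrow> ('s list \<Rightarrow> 'a) set" where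
  "cyl a N = Pi\<^sub>E hists (\<lambda>h. if h \<in> N then {a h} else A)"

lemma cyl_open:
  assumes "finite N" "a \<in> K"
  shows "openin PT (cyl a N)"
  unfolding cyl_def openin_PiE_gen
proof (intro disjI2 conjI ballI)
  show "finite {i \<in> hists. (if i \<in> N then {a i} else A) \<noteq> topspace (top_of_set A)}"
    by (rule finite_subset[OF _ assms(1)]) auto
  fix i :: "'s list" assume "i \<in> hists"
  then show "openin (top_of_set A) (if i \<in> N then {a i} else A)"
    using singleton_openin[OF K_A[OF assms(2)]] openin_topspace[of "top_of_set A"] by auto
qed

lemma cyl_self: "a \<in> K \<Longrightarrow> a \<in> cyl a N"
  unfolding cyl_def using K_PiE by (auto simp: K_A)

lemma cyl_eq: "b \<in> cyl a N \<Longrightarrow> h \<in> N \<inter> hists \<Longrightarrow> b h = a h"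
  unfolding cyl_def by (drule PiE_mem[of b hists _ h]) auto

lemma fuc_openin:
  assumes f: "fuc f" and S: "open S"
  shows "openin TT {a\<in>K. f a \<in> S}"
proof -
  define Q where "Q a N \<longleftrightarrow> finite N \<and> (\<forall>b\<in>K. (\<forall>h\<in>N. a h = b h) \<longrightarrow> f b \<in> S)" for a N
  have ex: "\<exists>N. Q a N" if a: "a \<in> {a\<in>K. f a \<in> S}" for a
  proof -
    have "f a \<in> S" using a by simp
    then obtain e where e: "e > 0" "ball (f a) e \<subseteq> S" using S openE by metis
    have "e / 2 > 0" using e by simp
    then obtain N where N: "finite N" "\<forall>a\<in>K. \<forall>b\<in>K. (\<forall>h\<in>N. a h = b h) \<longrightarrow> \<bar>f a - f b\<bar> \<le> e / 2"
      using f unfolding fuc_def by blast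
    have "\<forall>b\<in>K. (\<forall>h\<in>N. a h = b h) \<longrightarrow> f b \<in> S"
    proof (intro ballI impI)
      fix b assume b: "b \<in> K" "\<forall>h\<in>N. a h = b h"
      have "a \<in> K" using a by simp
      then have "\<bar>f a - f b\<bar> \<le> e / 2" using N(2) b by blast
      then have "f b \<in> ball (f a) e" using e(1) by (simp add: dist_real_def)
      then show "f b \<in> S" using e(2) by blast
    qed
    then show ?thesis unfolding Q_def using N(1) by blast
  qed
  define Nf where "Nf a = (SOME N. Q a N)" for a
  have Nf: "Q a (Nf a)" if "a \<in> {a\<in>K. f a \<in> S}" for a
    unfolding Nf_def using ex[OF that] by (rule someI_ex)
  show ?thesis
    unfolding openin_subtopology
  proof (intro exI conjI)
    show "openin PT (\<Union>a\<in>{a\<in>K. f a \<in> S}. cyl a (Nf a))"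
    proof (rule openin_Union)
      fix U assume "U \<in> (\<lambda>a. cyl a (Nf a)) ` {a\<in>K. f a \<in> S}"
      then obtain a where a: "a \<in> {a\<in>K. f a \<in> S}" "U = cyl a (Nf a)" by blast
      have "finite (Nf a)" using Nf[OF a(1)] unfolding Q_def by simp
      then show "openin PT U" using cyl_open[of "Nf a" a] a by simp
    qed
    show "{a \<in> K. f a \<in> S} = (\<Union>a\<in>{a\<in>K. f a \<in> S}. cyl a (Nf a)) \<inter> K"
    proof
      show "{a \<in> K. f a \<in> S} \<subseteq> (\<Union>a\<in>{a\<in>K. f a \<in> S}. cyl a (Nf a)) \<inter> K"
      proof
        fix a assume "a \<in> {a \<in> K. f a \<in> S}"
        then show "a \<in> (\<Union>a\<in>{a\<in>K. f a \<in> S}. cyl a (Nf a)) \<inter> K"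
          using cyl_self[of a "Nf a"] by blast
      qed
      show "(\<Union>a\<in>{a\<in>K. f a \<in> S}. cyl a (Nf a)) \<inter> K \<subseteq> {a \<in> K. f a \<in> S}"
      proof
        fix b assume "b \<in> (\<Union>a\<in>{a\<in>K. f a \<in> S}. cyl a (Nf a)) \<inter> K"
        then obtain a where a: "a \<in> {a\<in>K. f a \<in> S}" "b \<in> cyl a (Nf a)" "b \<in> K" by blast
        then have "\<forall>h\<in>Nf a \<inter> hists. a h = b h" using cyl_eq[of b a "Nf a"] by auto
        moreover have "a \<in> K" using a by simp
        ultimately have "\<forall>h\<in>Nf a. a h = b h" using K_agree[of a b "Nf a"] a(3) by simp
        then show "b \<in> {a \<in> K. f a \<in> S}" using Nf[OF a(1)] a(3) unfolding Q_def by blast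
      qed
    qed
  qed
qed

lemma sets_borel_of_TT: "sets (borel_of TT) = sigma_sets K {U. openin TT U}"
  unfolding borel_of_def topspace_TT
proof (rule sets_measure_of)
  show "{U. openin TT U} \<subseteq> Pow K" using openin_subset[of TT] topspace_TT by auto
qed

lemma space_borel_of_TT: "space (borel_of TT) = K"
  unfolding borel_of_def topspace_TT
proof (rule space_measure_of)
  show "{U. openin TT U} \<subseteq> Pow K" using openin_subset[of TT] topspace_TT by auto
qed

lemma fuc_meas:
  assumes f: "fuc f" and M: "space M = K" "sets M = sets (borel_of TT)"
  shows "f \<in> borel_measurable M"
proof (rule borel_measurableI)
  fix S :: "real set" assume "open S"
  have "f -` S \<inter> space M = {a\<in>K. f a \<in> S}" using M by auto
  also have "\<dots> \<in> sets M"
    unfolding M sets_borel_of_TT using fuc_openin[OF f \<open>open S\<close>] by (auto intro: sigma_sets.Basic)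
  finally show "f -` S \<inter> space M \<in> sets M" .
qed

lemma plan_lot_D:
  assumes "P \<in> plan_lotteries A \<zeta> p x0"
  shows "prob_space P" "space P = K" "sets P = sets (borel_of TT)"
  using assms unfolding plan_lotteries_def by auto


section \<open>Coding plans as reals\<close>

definition cA :: "'a \<Rightarrow> nat" where "cA = (SOME h. bij_betw h A {0..<card A})"

lemma cA_bij: "bij_betw cA A {0..<card A}"
  unfolding cA_def using ex_bij_betw_finite_nat[OF A_fin] by (rule someI_ex)

lemma cardA_pos: "card A \<ge> 1"
  using A_ne A_fin by (simp add: Suc_le_eq card_gt_0_iff)

definition dig :: "'a \<Rightarrow> nat" where "dig b = (if b \<in> A then cA b + 1 else 1)"

lemma dig_ge: "1 \<le> dig b" by (simp add: dig_def)

lemma dig_le: "dig b \<le> card A"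
proof (cases "b \<in> A")
  case True
  then have "cA b < card A" using cA_bij by (auto simp: bij_betw_def)
  then show ?thesis using True by (simp add: dig_def)
qed (use cardA_pos in \<open>simp add: dig_def\<close>)

definition Q :: real where "Q = real (card A + 2)"

lemma Q_ge: "Q \<ge> 3" using cardA_pos by (simp add: Q_def)

definition dseq :: "('s list \<Rightarrow> 'a) \<Rightarrow> nat \<Rightarrow> real" where
  "dseq a i = real (dig (a (from_nat i)))"

lemma dseq_ge: "1 \<le> dseq a i" using dig_ge by (simp add: dseq_def)
lemma dseq_le: "dseq a i \<le> real (card A)" using dig_le by (simp add: dseq_def)

definition Tl :: "('s list \<Rightarrow> 'a) \<Rightarrow> nat \<Rightarrow> real" where
  "Tl a i = (\<Sum>k. dseq a (k + i) / Q ^ Suc k)"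

definition phi :: "('s list \<Rightarrow> 'a) \<Rightarrow> real" where "phi a = Tl a 0"

lemma geo_sums: "(\<lambda>k. c / Q ^ Suc k) sums (c / (Q - 1))"
proof -
  have "(\<lambda>k. (1 / Q) ^ k) sums (1 / (1 - 1 / Q))"
    using Q_ge by (intro geometric_sums) auto
  then have "(\<lambda>k. (c / Q) * (1 / Q) ^ k) sums ((c / Q) * (1 / (1 - 1 / Q)))"
    by (rule sums_mult)
  moreover have "(c / Q) * (1 / (1 - 1 / Q)) = c / (Q - 1)" using Q_ge by (simp add: field_simps)
  moreover have "(\<lambda>k. (c / Q) * (1 / Q) ^ k) = (\<lambda>k. c / Q ^ Suc k)" by (rule ext) (simp add: power_divide)
  ultimately show ?thesis by metis
qed

lemma Tl_summable: "summable (\<lambda>k. dseq a (k + i) / Q ^ Suc k)"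
proof (rule summable_comparison_test[where g="\<lambda>k. real (card A) / Q ^ Suc k"])
  show "\<exists>N. \<forall>n\<ge>N. norm (dseq a (n + i) / Q ^ Suc n) \<le> real (card A) / Q ^ Suc n"
  proof (intro exI allI impI)
    fix n :: nat
    have "dseq a (n + i) / Q ^ Suc n \<le> real (card A) / Q ^ Suc n"
      using dseq_le Q_ge by (intro divide_right_mono) auto
    moreover have "0 \<le> dseq a (n + i) / Q ^ Suc n" using dseq_ge[of a "n+i"] Q_ge by simp
    ultimately show "norm (dseq a (n + i) / Q ^ Suc n) \<le> real (card A) / Q ^ Suc n" by simp
  qed
  show "summable (\<lambda>k. real (card A) / Q ^ Suc k)" using geo_sums sums_summable by blast
qed

lemma Tl_ge: "1 / (Q - 1) \<le> Tl a i"
proof -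
  have "(\<Sum>k. 1 / Q ^ Suc k) \<le> Tl a i"
    unfolding Tl_def using dseq_ge Q_ge Tl_summable geo_sums[of 1]
    by (intro suminf_le) (auto intro!: divide_right_mono sums_summable)
  then show ?thesis using geo_sums[of 1] sums_unique by metis
qed

lemma Tl_le: "Tl a i \<le> real (card A) / (Q - 1)"
proof -
  have "Tl a i \<le> (\<Sum>k. real (card A) / Q ^ Suc k)"
    unfolding Tl_def using dseq_le Q_ge Tl_summable geo_sums[of "real (card A)"]
    by (intro suminf_le) (auto intro!: divide_right_mono sums_summable)
  then show ?thesis using geo_sums[of "real (card A)"] sums_unique by metis
qed

lemma cardA_Q: "real (card A) / (Q - 1) = 1 - 1 / (Q - 1)"
  using Q_ge by (simp add: Q_def field_simps)

lemma Tl_pos: "0 < Tl a i" using Tl_ge[of a i] Q_ge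
  by (smt (verit, best) divide_pos_pos)

lemma Tl_lt1: "Tl a i < 1" using Tl_le[of a i] cardA_Q Q_ge
  by (smt (verit, best) divide_pos_pos)

lemma Tl_rec: "Q * Tl a i = dseq a i + Tl a (Suc i)"
proof -
  define f where "f k = dseq a (k + i) / Q ^ Suc k" for k
  have sf: "summable f" unfolding f_def by (rule Tl_summable)
  have "(\<Sum>k. f (Suc k)) = suminf f - f 0" by (rule suminf_split_head[OF sf])
  moreover have "(\<lambda>k. f (Suc k)) = (\<lambda>k. (dseq a (k + Suc i) / Q ^ Suc k) / Q)"
    by (auto simp: f_def field_simps)
  moreover have "(\<Sum>k. (dseq a (k + Suc i) / Q ^ Suc k) / Q) = Tl a (Suc i) / Q"
    unfolding Tl_def by (rule suminf_divide[OF Tl_summable])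
  moreover have "suminf f = Tl a i" unfolding Tl_def f_def[abs_def] by (rule refl)
  moreover have "f 0 = dseq a i / Q" by (simp add: f_def)
  ultimately have "Tl a (Suc i) / Q = Tl a i - dseq a i / Q"
    by metis
  then show ?thesis using Q_ge by (simp add: field_simps)
qed

fun Jd :: "('s list \<Rightarrow> 'a) \<Rightarrow> nat \<Rightarrow> int" where
  "Jd a 0 = 0"
| "Jd a (Suc i) = int (card A + 2) * Jd a i + int (dig (a (from_nat i)))"

lemma phi_expand: "phi a * Q ^ i = of_int (Jd a i) + Tl a i"
proof (induction i)
  case 0
  then show ?case by (simp add: phi_def)
next
  case (Suc i)
  have "phi a * Q ^ Suc i = Q * (phi a * Q ^ i)" by simp
  also have "\<dots> = Q * of_int (Jd a i) + (dseq a i + Tl a (Suc i))"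
    using Suc Tl_rec[of a i] by (simp add: distrib_left)
  also have "\<dots> = of_int (Jd a (Suc i)) + Tl a (Suc i)"
    by (simp add: Q_def dseq_def)
  finally show ?case .
qed

lemma floor_phi: "\<lfloor>phi a * Q ^ i\<rfloor> = Jd a i"
  using phi_expand[of a i] Tl_pos[of a i] Tl_lt1[of a i] by (intro floor_unique) auto

definition digit :: "nat \<Rightarrow> real \<Rightarrow> int" where
  "digit i y = \<lfloor>y * Q ^ Suc i\<rfloor> mod int (card A + 2)"

lemma digit_phi: "digit i (phi a) = int (dig (a (from_nat i)))"
proof -
  have "digit i (phi a) = Jd a (Suc i) mod int (card A + 2)"
    unfolding digit_def floor_phi by simp
  also have "\<dots> = int (dig (a (from_nat i))) mod int (card A + 2)"
    by simp
  also have "\<dots> = int (dig (a (from_nat i)))"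
    using dig_le[of "a (from_nat i)"] by (intro mod_pos_pos_trivial) auto
  finally show ?thesis .
qed

lemma phi_range: "0 \<le> phi a" "phi a \<le> 1"
  using Tl_pos[of a 0] Tl_lt1[of a 0] by (auto simp: phi_def)

lemma phi_sep: "\<bar>phi a - of_int j / Q ^ i\<bar> \<ge> 1 / ((Q - 1) * Q ^ i)"
proof -
  have Qi: "Q ^ i > 0" using Q_ge by simp
  have "\<bar>of_int (Jd a i) + Tl a i - of_int j\<bar> \<ge> 1 / (Q - 1)"
  proof (cases "j \<le> Jd a i")
    case True
    then have "of_int j \<le> (of_int (Jd a i) :: real)" by simp
    then show ?thesis using Tl_ge[of a i] by linarith
  next
    case False
    then have "of_int j \<ge> (of_int (Jd a i) :: real) + 1" by simp
    then show ?thesis using Tl_le[of a i] cardA_Q by linarith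
  qed
  then have "\<bar>phi a * Q ^ i - of_int j\<bar> \<ge> 1 / (Q - 1)" using phi_expand by simp
  moreover have "\<bar>phi a * Q ^ i - of_int j\<bar> = \<bar>phi a - of_int j / Q ^ i\<bar> * Q ^ i"
  proof -
    have "(phi a - of_int j / Q ^ i) * Q ^ i = phi a * Q ^ i - of_int j / Q ^ i * Q ^ i"
      by (rule left_diff_distrib)
    also have "of_int j / Q ^ i * Q ^ i = of_int j" using Qi by (metis less_irrefl nonzero_eq_divide_eq)
    finally have "phi a * Q ^ i - of_int j = (phi a - of_int j / Q ^ i) * Q ^ i" by simp
    then show ?thesis using Qi by (simp add: abs_mult)
  qed
  ultimately have E: "1 / (Q - 1) \<le> \<bar>phi a - of_int j / Q ^ i\<bar> * Q ^ i" by simp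
  have "1 / ((Q - 1) * Q ^ i) = (1 / (Q - 1)) / Q ^ i" by simp
  also have "\<dots> \<le> (\<bar>phi a - of_int j / Q ^ i\<bar> * Q ^ i) / Q ^ i"
    using E Qi by (intro divide_right_mono) auto
  also have "\<dots> = \<bar>phi a - of_int j / Q ^ i\<bar>" using Qi by (metis less_irrefl nonzero_mult_div_cancel_right)
  finally show ?thesis .
qed

lemma Jd_cong: "(\<And>k. k < m \<Longrightarrow> a (from_nat k) = b (from_nat k)) \<Longrightarrow> Jd a m = Jd b m"
  by (induction m) auto

lemma phi_close:
  assumes "\<And>k. k < m \<Longrightarrow> a (from_nat k) = b (from_nat k)"
  shows "\<bar>phi a - phi b\<bar> \<le> 1 / Q ^ m"
proof -
  have Qm: "Q ^ m > 0" using Q_ge by simp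
  have "phi a * Q ^ m - phi b * Q ^ m = Tl a m - Tl b m"
    using phi_expand[of a m] phi_expand[of b m] Jd_cong[of m a b] assms by simp
  moreover have "\<bar>Tl a m - Tl b m\<bar> \<le> 1"
    using Tl_pos[of a m] Tl_pos[of b m] Tl_lt1[of a m] Tl_lt1[of b m] by linarith
  ultimately have "\<bar>phi a - phi b\<bar> * Q ^ m \<le> 1"
    by (metis abs_mult left_diff_distrib abs_of_pos Qm)
  then show ?thesis using Qm by (simp add: field_simps)
qed

lemma phi_fuc: "fuc phi"
  unfolding fuc_def
proof (intro allI impI)
  fix \<epsilon> :: real assume "\<epsilon> > 0"
  obtain m where m: "(1 / Q) ^ m < \<epsilon>"
    using real_arch_pow_inv[OF \<open>\<epsilon> > 0\<close>, of "1 / Q"] Q_ge by auto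
  show "\<exists>N. finite N \<and> (\<forall>a\<in>K. \<forall>b\<in>K. (\<forall>h\<in>N. a h = b h) \<longrightarrow> \<bar>phi a - phi b\<bar> \<le> \<epsilon>)"
  proof (intro exI conjI ballI impI)
    show "finite (from_nat ` {..<m} :: 's list set)" by simp
    fix a b :: "'s list \<Rightarrow> 'a" assume "\<forall>h\<in>from_nat ` {..<m}. a h = b h"
    then have "\<bar>phi a - phi b\<bar> \<le> 1 / Q ^ m" by (intro phi_close) auto
    then show "\<bar>phi a - phi b\<bar> \<le> \<epsilon>" using m by (simp add: power_divide)
  qed
qed

definition undig :: "int \<Rightarrow> 'a" where
  "undig k = (if 1 \<le> k \<and> k \<le> int (card A) then inv_into A cA (nat k - 1) else undefined)"

definition psi :: "real \<Rightarrow> 's list \<Rightarrow> 'a" where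
  "psi y h = undig (digit (to_nat h) y)"

lemma psi_phi: "b h \<in> A \<Longrightarrow> psi (phi b) h = b h"
proof -
  assume bh: "b h \<in> A"
  have "digit (to_nat h) (phi b) = int (cA (b h) + 1)"
    using bh by (simp add: digit_phi dig_def)
  moreover have "cA (b h) < card A" using bh cA_bij by (auto simp: bij_betw_def)
  moreover have "nat (int (cA (b h) + 1)) - 1 = cA (b h)" by simp
  ultimately have "psi (phi b) h = inv_into A cA (cA (b h))"
    unfolding psi_def undig_def by (simp only:) simp
  then show ?thesis using bh cA_bij by (simp add: bij_betw_inv_into_left)
qed

definition Bset :: "real set" where "Bset = (\<Union>i. range (\<lambda>j::int. of_int j / Q ^ i))"

lemma Bset_countable: "countable Bset"
  unfolding Bset_def by auto

lemma digit_loc: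
  assumes "y \<notin> Bset"
  shows "\<forall>\<^sub>F z in nhds y. digit i z = digit i y"
proof -
  define c where "c = Q ^ Suc i"
  have c: "c > 0" using Q_ge by (simp add: c_def)
  define k where "k = \<lfloor>y * c\<rfloor>"
  have "y * c \<noteq> of_int k"
  proof
    assume "y * c = of_int k"
    then have "y = of_int k / c" using c by (simp add: eq_divide_eq)
    then have "y = of_int k / Q ^ Suc i" by (simp add: c_def)
    then have "y \<in> range (\<lambda>j::int. of_int j / Q ^ Suc i)" by blast
    then show False using assms unfolding Bset_def by blast
  qed
  moreover have "of_int k \<le> y * c" unfolding k_def by (rule of_int_floor_le)
  ultimately have lo: "of_int k < y * c" by linarith
  have hi: "y * c < of_int k + 1" unfolding k_def by (rule real_of_int_floor_add_one_gt)
  define U where "U = {z. of_int k < z * c} \<inter> {z. z * c < of_int k + 1}"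
  have "open U" unfolding U_def
    by (intro open_Int open_Collect_less continuous_intros)
  moreover have "y \<in> U" using lo hi by (simp add: U_def)
  moreover have "\<forall>z\<in>U. digit i z = digit i y"
  proof
    fix z assume "z \<in> U"
    then have "\<lfloor>z * c\<rfloor> = k" unfolding U_def by (intro floor_unique) auto
    then show "digit i z = digit i y" by (simp add: digit_def c_def k_def)
  qed
  ultimately show ?thesis unfolding eventually_nhds by blast
qed


section \<open>Retraction onto K\<close>

definition chs :: "'x \<Rightarrow> 's \<Rightarrow> 'a \<Rightarrow> 'a" where
  "chs x s b = (if b \<in> Atil A p x s then b else (SOME c. c \<in> Atil A p x s))"

lemma chs_in: "x \<in> X \<Longrightarrow> chs x s b \<in> Atil A p x s"
  unfolding chs_def using Atil_ne[of x s] by (auto intro: someI_ex)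

lemma chs_id: "b \<in> Atil A p x s \<Longrightarrow> chs x s b = b"
  unfolding chs_def by simp

lemma Atil_sub: "Atil A p x s \<subseteq> A" unfolding Atil_def by auto

fun xr :: "('s list \<Rightarrow> 'a) \<Rightarrow> 's list \<Rightarrow> 'x" where
  "xr a [] = x0"
| "xr a [s] = x0"
| "xr a (s # s' # rs) = \<zeta> (xr a (s' # rs)) (chs (xr a (s' # rs)) s' (a (rev (s' # rs)))) s'"

definition ret :: "('s list \<Rightarrow> 'a) \<Rightarrow> 's list \<Rightarrow> 'a" where
  "ret a h = (if h \<in> hists then chs (xr a (rev h)) (last h) (a h) else undefined)"

lemma xr_X: "xr a rl \<in> X"
proof (induction rl)
  case (Cons s rl)
  then show ?case
  proof (cases rl)
    case (Cons s' rs)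
    then have "xr a (s' # rs) \<in> X" using \<open>xr a rl \<in> X\<close> by simp
    moreover have "chs (xr a (s' # rs)) s' (a (rev (s' # rs))) \<in> A"
      using chs_in[OF calculation] Atil_sub by blast
    ultimately show ?thesis using Cons zeta_X by simp
  qed (simp add: x0_X)
qed (simp add: x0_X)

lemma xrev_ret: "xrev \<zeta> x0 (ret a) rl = xr a rl"
proof (induction rl)
  case (Cons s rl)
  then show ?case
  proof (cases rl)
    case (Cons s' rs)
    have "rev (s' # rs) \<in> hists" by (simp add: hists_def)
    then have "ret a (rev (s' # rs)) = chs (xr a (s' # rs)) s' (a (rev (s' # rs)))"
      by (simp add: ret_def last_rev)
    then show ?thesis using Cons.IH Cons by simp
  qed simp
qed simp

lemma xpath_ret: "xpath \<zeta> x0 (ret a) h = xr a (rev h)"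
  unfolding xpath_def by (rule xrev_ret)

lemma ret_K: "ret a \<in> K"
  unfolding Atil_inf_def
proof (intro CollectI conjI ballI PiE_I)
  fix h :: "'s list" assume "h \<in> hists"
  have "chs (xr a (rev h)) (last h) (a h) \<in> A" using chs_in[OF xr_X] Atil_sub by blast
  then show "ret a h \<in> A" unfolding ret_def using \<open>h \<in> hists\<close> by simp
  show "ret a h \<in> Atil A p (xpath \<zeta> x0 (ret a) h) (last h)"
    using \<open>h \<in> hists\<close> unfolding xpath_ret ret_def using chs_in[OF xr_X] by auto
next
  fix h :: "'s list" assume "h \<notin> hists"
  then show "ret a h = undefined" by (simp add: ret_def)
qed

lemma xr_K: "a \<in> K \<Longrightarrow> xr a rl = xrev \<zeta> x0 a rl"
proof (induction rl)
  case (Cons s rl)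
  then show ?case
  proof (cases rl)
    case (Cons s' rs)
    have h: "rev (s' # rs) \<in> hists" by (simp add: hists_def)
    have "a (rev (s' # rs)) \<in> Atil A p (xpath \<zeta> x0 a (rev (s' # rs))) (last (rev (s' # rs)))"
      using \<open>a \<in> K\<close> h unfolding Atil_inf_def by blast
    then have "a (rev (s' # rs)) \<in> Atil A p (xrev \<zeta> x0 a (s' # rs)) s'"
      by (simp add: xpath_def last_rev)
    then have "chs (xr a (s' # rs)) s' (a (rev (s' # rs))) = a (rev (s' # rs))"
      using Cons.IH Cons.prems Cons by (simp add: chs_id)
    then show ?thesis using Cons.IH Cons.prems Cons by simp
  qed simp
qed simp

lemma ret_id: "a \<in> K \<Longrightarrow> ret a = a"
proof
  fix h assume a: "a \<in> K"
  show "ret a h = a h"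
  proof (cases "h \<in> hists")
    case True
    then have "a h \<in> Atil A p (xpath \<zeta> x0 a h) (last h)" using a unfolding Atil_inf_def by blast
    then show ?thesis using True a by (simp add: ret_def xr_K xpath_def chs_id)
  next
    case False
    then show ?thesis using K_undef[OF a False] by (simp add: ret_def)
  qed
qed

lemma xr_cong:
  "(\<forall>t u. rl = u @ t \<longrightarrow> t \<noteq> [] \<longrightarrow> a (rev t) = b (rev t)) \<longrightarrow> xr a rl = xr b rl"
proof (induction rl)
  case (Cons s rl)
  show ?case
  proof (cases rl)
    case (Cons s' rs)
    show ?thesis
    proof
      assume H: "\<forall>t u. s # rl = u @ t \<longrightarrow> t \<noteq> [] \<longrightarrow> a (rev t) = b (rev t)"
      then have "\<forall>t u. rl = u @ t \<longrightarrow> t \<noteq> [] \<longrightarrow> a (rev t) = b (rev t)"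
        by (metis append_Cons)
      then have "xr a rl = xr b rl" using Cons.IH by blast
      moreover have "a (rev (s' # rs)) = b (rev (s' # rs))"
        using H Cons by (metis append_Cons append_Nil list.distinct(1))
      ultimately show "xr a (s # rl) = xr b (s # rl)" using Cons by simp
    qed
  qed simp
qed simp

lemma ret_cong:
  assumes "\<And>h'. h' \<noteq> [] \<Longrightarrow> (\<exists>u. h = h' @ u) \<Longrightarrow> a h' = b h'"
  shows "ret a h = ret b h"
proof (cases "h \<in> hists")
  case True
  have "xr a (rev h) = xr b (rev h)"
  proof (rule xr_cong[rule_format])
    fix t u assume "rev h = u @ t" "t \<noteq> []"
    then have "h = rev t @ rev u" by (metis rev_append rev_rev_ident)
    then show "a (rev t) = b (rev t)" using assms \<open>t \<noteq> []\<close> by auto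
  qed
  moreover have "a h = b h" using assms True by (auto simp: hists_def)
  ultimately show ?thesis by (simp add: ret_def)
qed (simp add: ret_def)

definition psk :: "real \<Rightarrow> 's list \<Rightarrow> 'a" where "psk y = ret (psi y)"

lemma psk_K: "psk y \<in> K" unfolding psk_def by (rule ret_K)

lemma psk_phi: "a \<in> K \<Longrightarrow> psk (phi a) = a"
proof -
  assume a: "a \<in> K"
  have "ret (psi (phi a)) = ret a"
  proof
    fix h show "ret (psi (phi a)) h = ret a h"
    proof (rule ret_cong)
      fix h' :: "'s list" assume "h' \<noteq> []"
      then have "h' \<in> hists" by (simp add: hists_def)
      then show "psi (phi a) h' = a h'" using psi_phi K_A[OF a] by blast
    qed
  qed
  then show ?thesis using ret_id[OF a] by (simp add: psk_def)
qed

definition Pre :: "'s list set \<Rightarrow> 's list set" where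
  "Pre N = {h'. h' \<noteq> [] \<and> (\<exists>h\<in>N. \<exists>u. h = h' @ u)}"

lemma Pre_finite: "finite N \<Longrightarrow> finite (Pre N)"
proof -
  assume N: "finite N"
  have "Pre N \<subseteq> (\<Union>h\<in>N. (\<lambda>k. take k h) ` {..length h})"
  proof
    fix h' assume "h' \<in> Pre N"
    then obtain h u where "h \<in> N" "h = h' @ u" unfolding Pre_def by blast
    then have "h' = take (length h') h" "length h' \<le> length h" by auto
    then show "h' \<in> (\<Union>h\<in>N. (\<lambda>k. take k h) ` {..length h})" using \<open>h \<in> N\<close> by blast
  qed
  moreover have "finite (\<Union>h\<in>N. (\<lambda>k. take k h) ` {..length h})" using N by auto
  ultimately show ?thesis by (rule finite_subset)
qed

lemma psk_dep:
  assumes "\<forall>i\<in>to_nat ` Pre N. digit i y = digit i z"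
  shows "\<forall>h\<in>N. psk y h = psk z h"
proof
  fix h assume "h \<in> N"
  show "psk y h = psk z h" unfolding psk_def
  proof (rule ret_cong)
    fix h' :: "'s list" assume "h' \<noteq> []" "\<exists>u. h = h' @ u"
    then have "h' \<in> Pre N" using \<open>h \<in> N\<close> by (auto simp: Pre_def)
    then show "psi y h' = psi z h'" using assms by (simp add: psi_def)
  qed
qed

lemma digit_meas[measurable]: "digit i \<in> measurable borel (count_space UNIV)"
  unfolding digit_def by measurable

lemma dep_sets:
  assumes P: "finite P" and G: "\<And>y z. (\<forall>i\<in>P. digit i y = digit i z) \<Longrightarrow> G y = G z"
  shows "{y. G y \<in> S} \<in> sets borel"
proof -
  define V where "V = {v \<in> Pi\<^sub>E P (\<lambda>_. UNIV). \<exists>y. (\<forall>i\<in>P. digit i y = v i) \<and> G y \<in> S}"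
  have cV: "countable V"
    by (rule countable_subset[OF _ countable_PiE[OF P]]) (auto simp: V_def)
  have eq: "{y. G y \<in> S} = (\<Union>v\<in>V. {y. \<forall>i\<in>P. digit i y = v i})"
  proof
    show "{y. G y \<in> S} \<subseteq> (\<Union>v\<in>V. {y. \<forall>i\<in>P. digit i y = v i})"
    proof
      fix y assume "y \<in> {y. G y \<in> S}"
      then have "restrict (\<lambda>i. digit i y) P \<in> V" by (auto simp: V_def)
      then show "y \<in> (\<Union>v\<in>V. {y. \<forall>i\<in>P. digit i y = v i})" by fastforce
    qed
    show "(\<Union>v\<in>V. {y. \<forall>i\<in>P. digit i y = v i}) \<subseteq> {y. G y \<in> S}"
    proof
      fix y assume "y \<in> (\<Union>v\<in>V. {y. \<forall>i\<in>P. digit i y = v i})"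
      then obtain v y' where "\<forall>i\<in>P. digit i y = v i" "\<forall>i\<in>P. digit i y' = v i" "G y' \<in> S"
        unfolding V_def by blast
      then have "G y = G y'" using G by metis
      then show "y \<in> {y. G y \<in> S}" using \<open>G y' \<in> S\<close> by simp
    qed
  qed
  have "{y. \<forall>i\<in>P. digit i y = v i} \<in> sets borel" for v
  proof -
    have "{y \<in> space borel. \<forall>i\<in>P. digit i y = v i} \<in> sets borel"
      using P by measurable
    then show ?thesis by simp
  qed
  then show ?thesis unfolding eq by (intro sets.countable_UN'[OF cV]) auto
qed

lemma psk_meas: "psk \<in> measurable borel (borel_of TT)"
  unfolding borel_of_def topspace_TT
proof (rule measurable_measure_of)
  show "{U. openin TT U} \<subseteq> Pow K" using openin_subset[of TT] topspace_TT by auto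
  show "psk \<in> space borel \<rightarrow> K" using psk_K by auto
  fix U assume "U \<in> {U. openin TT U}"
  then obtain V where V: "openin PT V" "U = V \<inter> K" unfolding openin_subtopology by auto
  define Fam where "Fam = {(N, c). finite N \<and> N \<subseteq> hists \<and> c \<in> Pi\<^sub>E N (\<lambda>_. A) \<and>
      (\<forall>a\<in>K. (\<forall>h\<in>N. a h = c h) \<longrightarrow> a \<in> U)}"
  have cF: "countable Fam"
  proof (rule countable_subset)
    show "Fam \<subseteq> (SIGMA N:{N. finite N}. Pi\<^sub>E N (\<lambda>_. A))" unfolding Fam_def by auto
    show "countable (SIGMA N:{N::'s list set. finite N}. Pi\<^sub>E N (\<lambda>_. A))"
    proof (rule countable_SIGMA)
      show "countable {N::'s list set. finite N}" using countable_Collect_finite by simp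
      fix N :: "'s list set" assume "N \<in> {N. finite N}"
      then show "countable (Pi\<^sub>E N (\<lambda>_. A))" using A_fin by (intro countable_PiE countable_finite) auto
    qed
  qed
  have eq: "psk -` U \<inter> space borel = (\<Union>(N, c)\<in>Fam. {y. (\<forall>h\<in>N. psk y h = c h) \<in> {True}})"
  proof
    show "psk -` U \<inter> space borel \<subseteq> (\<Union>(N, c)\<in>Fam. {y. (\<forall>h\<in>N. psk y h = c h) \<in> {True}})"
    proof
      fix y assume "y \<in> psk -` U \<inter> space borel"
      then have yU: "psk y \<in> U" by simp
      then have "psk y \<in> V" using V by simp
      then obtain W where W: "finite {i \<in> hists. W i \<noteq> topspace (top_of_set A)}"
        "\<forall>i\<in>hists. openin (top_of_set A) (W i)" "psk y \<in> Pi\<^sub>E hists W" "Pi\<^sub>E hists W \<subseteq> V"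
        using V(1) unfolding openin_product_topology_alt by blast
      define N where "N = {i \<in> hists. W i \<noteq> A}"
      define c where "c = restrict (psk y) N"
      have "(N, c) \<in> Fam"
        unfolding Fam_def
      proof (intro CollectI case_prodI conjI ballI impI)
        show "finite N" using W(1) by (simp add: N_def)
        show "N \<subseteq> hists" by (auto simp: N_def)
        show "c \<in> Pi\<^sub>E N (\<lambda>_. A)" unfolding c_def using K_A[OF psk_K] by (auto simp: N_def)
        fix a assume a: "a \<in> K" "\<forall>h\<in>N. a h = c h"
        have "a \<in> Pi\<^sub>E hists W"
        proof (rule PiE_I)
          fix i :: "'s list" assume i: "i \<in> hists"
          show "a i \<in> W i"
          proof (cases "i \<in> N")
            case True
            then have "a i = psk y i" using a(2) by (simp add: c_def)
            then show ?thesis using W(3) i by auto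
          next
            case False
            then have "W i = A" using i by (simp add: N_def)
            then show ?thesis using K_A[OF a(1) i] by simp
          qed
        next
          fix i :: "'s list" assume "i \<notin> hists"
          then show "a i = undefined" using K_undef[OF a(1)] by simp
        qed
        then show "a \<in> U" using W(4) V(2) a(1) by blast
      qed
      moreover have "(\<forall>h\<in>N. psk y h = c h) \<in> {True}" by (simp add: c_def)
      ultimately show "y \<in> (\<Union>(N, c)\<in>Fam. {y. (\<forall>h\<in>N. psk y h = c h) \<in> {True}})" by blast
    qed
    show "(\<Union>(N, c)\<in>Fam. {y. (\<forall>h\<in>N. psk y h = c h) \<in> {True}}) \<subseteq> psk -` U \<inter> space borel"
    proof
      fix y assume "y \<in> (\<Union>(N, c)\<in>Fam. {y. (\<forall>h\<in>N. psk y h = c h) \<in> {True}})"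
      then obtain N c where "(N, c) \<in> Fam" "\<forall>h\<in>N. psk y h = c h" by blast
      then have "psk y \<in> U" using psk_K unfolding Fam_def by blast
      then show "y \<in> psk -` U \<inter> space borel" by simp
    qed
  qed
  have "{y. (\<forall>h\<in>N. psk y h = c h) \<in> {True}} \<in> sets borel" if "(N, c) \<in> Fam" for N c
  proof (rule dep_sets)
    have "finite N" using that by (simp add: Fam_def)
    then show "finite (to_nat ` Pre N)" using Pre_finite by blast
    fix y z assume "\<forall>i\<in>to_nat ` Pre N. digit i y = digit i z"
    then have "\<forall>h\<in>N. psk y h = psk z h" by (rule psk_dep)
    then show "(\<forall>h\<in>N. psk y h = c h) = (\<forall>h\<in>N. psk z h = c h)" by simp
  qed
  then show "psk -` U \<inter> space borel \<in> sets borel"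
    unfolding eq by (intro sets.countable_UN'[OF cF]) auto
qed

lemma F_cont:
  assumes f: "fuc f" and y: "y \<notin> Bset"
  shows "isCont (\<lambda>y. f (psk y)) y"
  unfolding isCont_def tendsto_iff
proof (intro allI impI)
  fix e :: real assume "e > 0"
  then obtain N where N: "finite N" "\<forall>a\<in>K. \<forall>b\<in>K. (\<forall>h\<in>N. a h = b h) \<longrightarrow> \<bar>f a - f b\<bar> \<le> e / 2"
    using f unfolding fuc_def by (meson half_gt_zero)
  have fin: "finite (to_nat ` Pre N)" using Pre_finite[OF N(1)] by simp
  have "\<forall>\<^sub>F z in nhds y. \<forall>i\<in>to_nat ` Pre N. digit i z = digit i y"
    using fin digit_loc[OF y] by (intro eventually_ball_finite) auto
  then have "\<forall>\<^sub>F z in nhds y. dist (f (psk z)) (f (psk y)) < e"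
  proof (rule eventually_mono)
    fix z assume "\<forall>i\<in>to_nat ` Pre N. digit i z = digit i y"
    then have "\<forall>h\<in>N. psk z h = psk y h" by (rule psk_dep)
    then have "\<bar>f (psk z) - f (psk y)\<bar> \<le> e / 2" using N(2) psk_K by blast
    then show "dist (f (psk z)) (f (psk y)) < e" using \<open>e > 0\<close> by (simp add: dist_real_def)
  qed
  then show "\<forall>\<^sub>F z in at y. dist (f (psk z)) (f (psk y)) < e"
    unfolding eventually_at_filter by (rule eventually_mono) simp
qed

lemma F_meas:
  assumes f: "fuc f"
  shows "(\<lambda>y. f (psk y)) \<in> borel_measurable borel"
  by (rule borel_measurable_continuous_countable_exceptions[OF Bset_countable])
     (use F_cont[OF f] in \<open>auto intro!: continuous_at_imp_continuous_on\<close>)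


lemma phi_meas: "space P = K \<Longrightarrow> sets P = sets (borel_of TT) \<Longrightarrow> phi \<in> borel_measurable P"
  by (rule fuc_meas[OF phi_fuc])

lemma mu_dist:
  assumes "P \<in> plan_lotteries A \<zeta> p x0"
  shows "real_distribution (distr P borel phi)"
proof -
  interpret prob_space P using plan_lot_D[OF assms] by simp
  show ?thesis using phi_meas[OF plan_lot_D(2,3)[OF assms]] by (intro real_distribution_distr) simp
qed

lemma int_phi:
  fixes g :: "real \<Rightarrow> real"
  assumes P: "P \<in> plan_lotteries A \<zeta> p x0" and g: "g \<in> borel_measurable borel"
  shows "(\<integral>y. g y \<partial>distr P borel phi) = (\<integral>a. g (phi a) \<partial>P)"
  by (rule integral_distr[OF phi_meas[OF plan_lot_D(2,3)[OF P]] g])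

lemma M_Bset:
  assumes Ps: "\<And>n. Ps n \<in> plan_lotteries A \<zeta> p x0"
    and M: "real_distribution M" and wc: "weak_conv_m (\<lambda>n. distr (Ps n) borel phi) M"
  shows "emeasure M Bset = 0"
proof -
  interpret M: real_distribution M by (rule M)
  have single: "measure M {b} = 0" if "b \<in> Bset" for b
  proof -
    obtain i j where b: "b = of_int j / Q ^ i" using \<open>b \<in> Bset\<close> unfolding Bset_def by blast
    define \<delta> where "\<delta> = 1 / ((Q - 1) * Q ^ i)"
    have \<delta>: "\<delta> > 0" using Q_ge by (simp add: \<delta>_def)
    define g where "g y = max 0 (1 - \<bar>y - b\<bar> / \<delta>)" for y
    have gc: "isCont g y" for y unfolding g_def using \<delta> by (intro continuous_intros) simp
    have gb: "norm (g y) \<le> 1" for y using \<delta> by (simp add: g_def)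
    have gm: "g \<in> borel_measurable borel"
      using gc by (intro borel_measurable_continuous_onI continuous_at_imp_continuous_on) auto
    have g0: "g (phi a) = 0" for a
    proof -
      have "\<bar>phi a - b\<bar> \<ge> \<delta>" unfolding b \<delta>_def by (rule phi_sep)
      then have "\<bar>phi a - b\<bar> / \<delta> \<ge> 1" using \<delta> by simp
      then show ?thesis by (simp add: g_def)
    qed
    have "(\<lambda>n. \<integral>y. g y \<partial>distr (Ps n) borel phi) \<longlonglongrightarrow> (\<integral>y. g y \<partial>M)"
      by (rule weak_conv_imp_integral_bdd_continuous_conv[OF mu_dist[OF Ps] M wc gc gb])
    moreover have "(\<integral>y. g y \<partial>distr (Ps n) borel phi) = 0" for n
    proof -
      have "(\<integral>y. g y \<partial>distr (Ps n) borel phi) = (\<integral>a. g (phi a) \<partial>Ps n)" by (rule int_phi[OF Ps gm])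
      also have "\<dots> = 0" unfolding g0 by simp
      finally show ?thesis .
    qed
    ultimately have "(\<lambda>n. 0::real) \<longlonglongrightarrow> (\<integral>y. g y \<partial>M)" by simp
    then have Mg: "(\<integral>y. g y \<partial>M) = 0" using LIMSEQ_unique[OF _ tendsto_const] by metis
    have "measure M {b} = (\<integral>y. indicator {b} y \<partial>M)" by simp
    also have "\<dots> \<le> (\<integral>y. g y \<partial>M)"
    proof (rule integral_mono)
      show "integrable M (indicator {b} :: real \<Rightarrow> real)"
        by (intro M.integrable_const_bound[where B=1]) (auto simp: indicator_def)
      show "integrable M g" using gb gm by (intro M.integrable_const_bound[where B=1]) auto
      fix y show "(indicator {b} y :: real) \<le> g y" unfolding g_def indicator_def by simp
    qed
    finally show ?thesis using Mg measure_nonneg[of M "{b}"] by simp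
  qed
  have "emeasure M Bset = (\<integral>\<^sup>+x. emeasure M {x} \<partial>count_space Bset)"
    by (rule emeasure_countable_singleton[OF _ Bset_countable]) simp
  also have "\<dots> = (\<integral>\<^sup>+x. 0 \<partial>count_space Bset)"
    by (rule nn_integral_cong) (simp add: M.emeasure_eq_measure single)
  finally show ?thesis by simp
qed

lemma main_conv:
  assumes Ps: "\<And>n. Ps n \<in> plan_lotteries A \<zeta> p x0"
    and M: "real_distribution M" and wc: "weak_conv_m (\<lambda>n. distr (Ps n) borel phi) M"
    and f: "fuc f" and fb: "\<And>a. a \<in> K \<Longrightarrow> \<bar>f a\<bar> \<le> C"
  shows "(\<lambda>n. \<integral>a. f a \<partial>Ps n) \<longlonglongrightarrow> (\<integral>a. f a \<partial>distr M (borel_of TT) psk)"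
proof -
  interpret M: real_distribution M by (rule M)
  define F where "F = (\<lambda>y. f (psk y))"
  have Fm: "F \<in> borel_measurable borel" unfolding F_def by (rule F_meas[OF f])
  have Fb: "norm (F y) \<le> C" for y using fb[OF psk_K] by (simp add: F_def)
  have disc: "M {x. \<not> isCont F x} = 0"
  proof (cases "{x. \<not> isCont F x} \<in> sets M")
    case True
    have "{x. \<not> isCont F x} \<subseteq> Bset" using F_cont[OF f] unfolding F_def by blast
    moreover have "Bset \<in> sets M"
      by (rule sets.countable[OF _ Bset_countable]) simp
    ultimately have "emeasure M {x. \<not> isCont F x} \<le> emeasure M Bset"
      by (intro emeasure_mono)
    then show ?thesis using M_Bset[OF Ps M wc] by simp
  next
    case False
    then show ?thesis by (rule emeasure_notin_sets)
  qed
  have lim: "(\<lambda>n. \<integral>y. F y \<partial>distr (Ps n) borel phi) \<longlonglongrightarrow> (\<integral>y. F y \<partial>M)"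
    by (rule weak_conv_imp_bdd_ae_continuous_conv[OF mu_dist[OF Ps] M wc disc Fb Fm])
  have e1: "(\<integral>y. F y \<partial>distr (Ps n) borel phi) = (\<integral>a. f a \<partial>Ps n)" for n
  proof -
    have "(\<integral>y. F y \<partial>distr (Ps n) borel phi) = (\<integral>a. F (phi a) \<partial>Ps n)" by (rule int_phi[OF Ps Fm])
    also have "\<dots> = (\<integral>a. f a \<partial>Ps n)"
    proof (rule Bochner_Integration.integral_cong[OF refl])
      fix a assume "a \<in> space (Ps n)"
      then have "a \<in> K" using plan_lot_D(2)[OF Ps] by blast
      then show "F (phi a) = f a" unfolding F_def by (simp only: psk_phi)
    qed
    finally show ?thesis .
  qed
  have e2: "(\<integral>y. F y \<partial>M) = (\<integral>a. f a \<partial>distr M (borel_of TT) psk)"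
  proof -
    have pm: "psk \<in> measurable M (borel_of TT)"
      unfolding measurable_cong_sets[OF M.events_eq_borel refl] by (rule psk_meas)
    have fm: "f \<in> borel_measurable (borel_of TT)" by (rule fuc_meas[OF f space_borel_of_TT refl])
    show ?thesis unfolding F_def by (rule integral_distr[OF pm fm, symmetric])
  qed
  show ?thesis using lim unfolding e1 e2 .
qed

lemma Pstar_in:
  assumes "real_distribution M"
  shows "distr M (borel_of TT) psk \<in> plan_lotteries A \<zeta> p x0"
proof -
  interpret M: real_distribution M by (rule assms)
  have pm: "psk \<in> measurable M (borel_of TT)"
    unfolding measurable_cong_sets[OF M.events_eq_borel refl] by (rule psk_meas)
  have "prob_space (distr M (borel_of TT) psk)" by (rule M.prob_space_distr[OF pm])
  moreover have "space (distr M (borel_of TT) psk) = K" using space_borel_of_TT by simp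
  moreover have "sets (distr M (borel_of TT) psk) = sets (borel_of TT)" by simp
  ultimately show ?thesis unfolding plan_lotteries_def by blast
qed


lemma fuc_diff: "fuc f \<Longrightarrow> fuc (\<lambda>a. f a - c)"
  unfolding fuc_def by simp

lemma fuc_mult_ind:
  assumes f: "fuc f" and Nz: "finite Nz"
    and G: "\<And>a b. (\<forall>h\<in>Nz. a h = b h) \<Longrightarrow> G a = G b" and Gb: "\<And>a. \<bar>G a\<bar> \<le> 1"
  shows "fuc (\<lambda>a. G a * f a)"
  unfolding fuc_def
proof (intro allI impI)
  fix \<epsilon> :: real assume "\<epsilon> > 0"
  then obtain N where N: "finite N" "\<forall>a\<in>K. \<forall>b\<in>K. (\<forall>h\<in>N. a h = b h) \<longrightarrow> \<bar>f a - f b\<bar> \<le> \<epsilon>"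
    using f unfolding fuc_def by blast
  show "\<exists>N. finite N \<and> (\<forall>a\<in>K. \<forall>b\<in>K. (\<forall>h\<in>N. a h = b h) \<longrightarrow> \<bar>G a * f a - G b * f b\<bar> \<le> \<epsilon>)"
  proof (intro exI conjI ballI impI)
    show "finite (N \<union> Nz)" using N Nz by simp
    fix a b assume ab: "a \<in> K" "b \<in> K" "\<forall>h\<in>N \<union> Nz. a h = b h"
    then have "G a = G b" using G by blast
    then have "\<bar>G a * f a - G b * f b\<bar> = \<bar>G a\<bar> * \<bar>f a - f b\<bar>"
      by (simp add: abs_mult[symmetric] right_diff_distrib)
    also have "\<dots> \<le> 1 * \<epsilon>"
      using ab N(2) Gb[of a] by (intro mult_mono) auto
    finally show "\<bar>G a * f a - G b * f b\<bar> \<le> \<epsilon>" by simp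
  qed
qed

lemma value_cong:
  assumes hs: "hs \<in> hists"
    and ab: "\<And>ys h'. h' \<noteq> [] \<Longrightarrow> (\<exists>u. hs @ ys = h' @ u) \<Longrightarrow> a h' = b h'"
  shows "value_of \<pi> \<beta> \<zeta> x0 f a hs = value_of \<pi> \<beta> \<zeta> x0 f b hs"
proof -
  have "cond_exp \<pi> hs n (\<lambda>h. f (xpath \<zeta> x0 a h) (a h) (last h))
      = cond_exp \<pi> hs n (\<lambda>h. f (xpath \<zeta> x0 b h) (b h) (last h))" for n
    unfolding cond_exp_def
  proof (rule sum.cong[OF refl])
    fix ys :: "'s list"
    have "xpath \<zeta> x0 a (hs @ ys) = xpath \<zeta> x0 b (hs @ ys)"
      by (rule xpath_cong) (use ab in blast)
    moreover have "a (hs @ ys) = b (hs @ ys)" using ab[of "hs @ ys" ys] hs by (auto simp: hists_def)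
    ultimately show "path_prob \<pi> (last hs) ys * f (xpath \<zeta> x0 a (hs @ ys)) (a (hs @ ys)) (last (hs @ ys))
        = path_prob \<pi> (last hs) ys * f (xpath \<zeta> x0 b (hs @ ys)) (b (hs @ ys)) (last (hs @ ys))"
      by simp
  qed
  then show ?thesis unfolding value_of_def disc_exp_def by simp
qed

lemma integrable_fuc:
  assumes P: "P \<in> plan_lotteries A \<zeta> p x0" and f: "fuc f" and fb: "\<And>a. a \<in> K \<Longrightarrow> \<bar>f a\<bar> \<le> C"
  shows "integrable P f"
proof -
  interpret prob_space P using plan_lot_D[OF P] by simp
  show ?thesis
    using fb plan_lot_D(2)[OF P] fuc_meas[OF f plan_lot_D(2,3)[OF P]]
    by (intro integrable_const_bound[where B=C]) auto
qed

lemma integral_fuc_le: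
  assumes P: "P \<in> plan_lotteries A \<zeta> p x0" and f: "fuc f" and fb: "\<And>a. a \<in> K \<Longrightarrow> \<bar>f a\<bar> \<le> C"
  shows "(\<integral>a. f a \<partial>P) \<le> C"
proof -
  interpret prob_space P using plan_lot_D[OF P] by simp
  have "(\<integral>a. f a \<partial>P) \<le> (\<integral>a. C \<partial>P)"
  proof (rule integral_mono)
    show "integrable P f" by (rule integrable_fuc[OF P f fb])
    show "integrable P (\<lambda>a. C)" by simp
    fix a assume "a \<in> space P"
    then show "f a \<le> C" using fb plan_lot_D(2)[OF P] by fastforce
  qed
  also have "\<dots> = C" by (simp add: prob_space)
  finally show ?thesis .
qed


lemma exists_max:
  fixes I :: nat and g :: "nat \<Rightarrow> 'x \<Rightarrow> 'a \<Rightarrow> 's \<Rightarrow> real" and gbar \<gamma> :: "nat \<Rightarrow> real"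
    and r :: "'x \<Rightarrow> 'a \<Rightarrow> 's \<Rightarrow> real" and s0 :: 's
  assumes r_bdd: "\<exists>B. \<forall>x\<in>X. \<forall>b\<in>A. \<forall>s. \<bar>r x b s\<bar> \<le> B"
    and g_bdd: "\<And>i. i < I \<Longrightarrow> \<exists>B. \<forall>x\<in>X. \<forall>b\<in>A. \<forall>s. \<bar>g i x b s\<bar> \<le> B"
    and feas: "\<And>s. \<exists>a. feasible_plan \<pi> \<beta> A \<zeta> p I g gbar x0 s a"
  shows "\<exists>Pstar \<in> plan_lotteries A \<zeta> p x0.
           lottery_constraints \<pi> \<beta> A \<zeta> I g gbar x0 Pstar \<and>
           (\<forall>P \<in> plan_lotteries A \<zeta> p x0. lottery_constraints \<pi> \<beta> A \<zeta> I g gbar x0 P \<longrightarrow>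
              lottery_objective \<pi> \<beta> \<zeta> r I g \<gamma> x0 s0 P
                \<le> lottery_objective \<pi> \<beta> \<zeta> r I g \<gamma> x0 s0 Pstar)"
proof -
  obtain Br where Br: "\<forall>x\<in>X. \<forall>b\<in>A. \<forall>s. \<bar>r x b s\<bar> \<le> Br" using r_bdd by blast
  define Bg where "Bg i = (SOME B. \<forall>x\<in>X. \<forall>b\<in>A. \<forall>s. \<bar>g i x b s\<bar> \<le> B)" for i
  have Bg: "\<forall>x\<in>X. \<forall>b\<in>A. \<forall>s. \<bar>g i x b s\<bar> \<le> Bg i" if "i < I" for i
    unfolding Bg_def using g_bdd[OF that] by (rule someI_ex)
  define u where "u = (\<lambda>x b s. r x b s + (\<Sum>i<I. \<gamma> i * g i x b s))"
  define Cu where "Cu = Br + (\<Sum>i<I. \<bar>\<gamma> i\<bar> * Bg i)"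
  have ub: "\<forall>x\<in>X. \<forall>b\<in>A. \<forall>s. \<bar>u x b s\<bar> \<le> Cu"
  proof (intro ballI allI)
    fix x b s assume xb: "x \<in> X" "b \<in> A"
    have "\<bar>\<Sum>i<I. \<gamma> i * g i x b s\<bar> \<le> (\<Sum>i<I. \<bar>\<gamma> i * g i x b s\<bar>)" by (rule sum_abs)
    also have "\<dots> \<le> (\<Sum>i<I. \<bar>\<gamma> i\<bar> * Bg i)"
    proof (rule sum_mono)
      fix i assume "i \<in> {..<I}"
      then have "\<bar>g i x b s\<bar> \<le> Bg i" using Bg xb by auto
      then show "\<bar>\<gamma> i * g i x b s\<bar> \<le> \<bar>\<gamma> i\<bar> * Bg i" by (simp add: abs_mult mult_left_mono)
    qed
    finally have "\<bar>\<Sum>i<I. \<gamma> i * g i x b s\<bar> \<le> (\<Sum>i<I. \<bar>\<gamma> i\<bar> * Bg i)" .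
    moreover have "\<bar>r x b s\<bar> \<le> Br" using Br xb by blast
    moreover have "\<bar>u x b s\<bar> \<le> \<bar>r x b s\<bar> + \<bar>\<Sum>i<I. \<gamma> i * g i x b s\<bar>"
      unfolding u_def by (rule abs_triangle_ineq)
    ultimately show "\<bar>u x b s\<bar> \<le> Cu" unfolding Cu_def by linarith
  qed
  define obj where "obj P = lottery_objective \<pi> \<beta> \<zeta> r I g \<gamma> x0 s0 P" for P
  have obj_eq: "obj P = (\<integral>a. value_of \<pi> \<beta> \<zeta> x0 u a [s0] \<partial>P)" for P
    unfolding obj_def lottery_objective_def u_def by simp
  have s0h: "[s0] \<in> hists" by (simp add: hists_def)
  have fo: "fuc (\<lambda>a. value_of \<pi> \<beta> \<zeta> x0 u a [s0])" by (rule value_fuc[OF ub s0h])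
  have fob: "\<bar>value_of \<pi> \<beta> \<zeta> x0 u a [s0]\<bar> \<le> Cu / (1 - \<beta>)" if "a \<in> K" for a
    by (rule value_bound[OF ub _ s0h]) (use K_A[OF that] in auto)
  define cf where "cf hs as i a = (if (\<forall>k < length as. a (take (Suc k) hs) = as ! k) then 1 else 0)
              * (value_of \<pi> \<beta> \<zeta> x0 (g i) a hs - gbar i)"
    for hs :: "'s list" and as :: "'a list" and i and a :: "'s list \<Rightarrow> 'a"
  have cons_eq: "lottery_constraints \<pi> \<beta> A \<zeta> I g gbar x0 P \<longleftrightarrow>
      (\<forall>hs\<in>hists. \<forall>as. length as = length hs - 1 \<longrightarrow> set as \<subseteq> A \<longrightarrow> (\<forall>i<I. (\<integral>a. cf hs as i a \<partial>P) \<ge> 0))" for P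
    unfolding lottery_constraints_def cf_def by simp
  have fc: "fuc (cf hs as i)" if "hs \<in> hists" "i < I" for hs as i
    unfolding cf_def
  proof (rule fuc_mult_ind[where Nz="(\<lambda>k. take (Suc k) hs) ` {..<length as}"])
    show "fuc (\<lambda>a. value_of \<pi> \<beta> \<zeta> x0 (g i) a hs - gbar i)"
      by (rule fuc_diff[OF value_fuc[OF Bg[OF that(2)] that(1)]])
    show "finite ((\<lambda>k. take (Suc k) hs) ` {..<length as})" by simp
    fix a b :: "'s list \<Rightarrow> 'a" assume "\<forall>h\<in>(\<lambda>k. take (Suc k) hs) ` {..<length as}. a h = b h"
    then show "(if \<forall>k<length as. a (take (Suc k) hs) = as ! k then 1 else 0) =
        (if \<forall>k<length as. b (take (Suc k) hs) = as ! k then 1 else (0::real))" by auto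
  next
    fix a :: "'s list \<Rightarrow> 'a"
    show "\<bar>if \<forall>k<length as. a (take (Suc k) hs) = as ! k then 1 else 0\<bar> \<le> (1::real)" by simp
  qed
  have fcb: "\<bar>cf hs as i a\<bar> \<le> Bg i / (1 - \<beta>) + \<bar>gbar i\<bar>" if "hs \<in> hists" "i < I" "a \<in> K" for hs as i a
  proof -
    have "\<bar>value_of \<pi> \<beta> \<zeta> x0 (g i) a hs\<bar> \<le> Bg i / (1 - \<beta>)"
      by (rule value_bound[OF Bg[OF that(2)] _ that(1)]) (use K_A[OF that(3)] in auto)
    moreover have "0 \<le> Bg i / (1 - \<beta>) + \<bar>gbar i\<bar>"
      using C_nonneg[OF Bg[OF that(2)]] beta1 by simp
    ultimately show ?thesis unfolding cf_def by (cases "\<forall>k<length as. a (take (Suc k) hs) = as ! k") auto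
  qed
  define Feas where "Feas = {P \<in> plan_lotteries A \<zeta> p x0. lottery_constraints \<pi> \<beta> A \<zeta> I g gbar x0 P}"

  \<comment> \<open>A feasible deterministic plan gives a feasible lottery\<close>
  define af where "af s = (SOME a. feasible_plan \<pi> \<beta> A \<zeta> p I g gbar x0 s a)" for s
  have af: "feasible_plan \<pi> \<beta> A \<zeta> p I g gbar x0 s (af s)" for s
    unfolding af_def using feas by (rule someI_ex)
  have afK: "af s \<in> K" for s using af[of s] by (simp add: feasible_plan_def)
  define astar where "astar h = (if h \<in> hists then af (hd h) h else undefined)" for h :: "'s list"
  have agree: "astar h' = af (hd hs) h'" if "hs \<in> hists" "h' \<noteq> []" "\<exists>u. hs @ ys = h' @ u" for hs ys h'
  proof -
    from that(3) obtain u where u: "hs @ ys = h' @ u" by blast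
    have "hs \<noteq> []" using that(1) by (simp add: hists_def)
    then have "hd (hs @ ys) = hd hs" by simp
    moreover have "hd (h' @ u) = hd h'" using that(2) by simp
    ultimately have "hd h' = hd hs" using u by simp
    then show ?thesis using that(2) by (simp add: astar_def hists_def)
  qed
  have astar_K: "astar \<in> K"
    unfolding Atil_inf_def
  proof (intro CollectI conjI ballI PiE_I)
    fix h :: "'s list" assume h: "h \<in> hists"
    then show "astar h \<in> A" using K_A[OF afK h] by (simp add: astar_def)
    have "xpath \<zeta> x0 astar h = xpath \<zeta> x0 (af (hd h)) h"
      by (rule xpath_cong) (use agree[OF h, of _ "[]"] in auto)
    moreover have "af (hd h) h \<in> Atil A p (xpath \<zeta> x0 (af (hd h)) h) (last h)"
      using afK h unfolding Atil_inf_def by blast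
    ultimately show "astar h \<in> Atil A p (xpath \<zeta> x0 astar h) (last h)"
      using h by (simp add: astar_def)
  next
    fix h :: "'s list" assume "h \<notin> hists"
    then show "astar h = undefined" by (simp add: astar_def)
  qed
  have astar_val: "value_of \<pi> \<beta> \<zeta> x0 (g i) astar hs \<ge> gbar i" if "hs \<in> hists" "i < I" for hs i
  proof -
    have "value_of \<pi> \<beta> \<zeta> x0 (g i) astar hs = value_of \<pi> \<beta> \<zeta> x0 (g i) (af (hd hs)) hs"
      by (rule value_cong[OF that(1)]) (rule agree[OF that(1)])
    moreover have "value_of \<pi> \<beta> \<zeta> x0 (g i) (af (hd hs)) hs \<ge> gbar i"
      using af[of "hd hs"] that unfolding feasible_plan_def by blast
    ultimately show ?thesis by simp
  qed
  define P0 where "P0 = return (borel_of TT) astar"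
  have astar_sp: "astar \<in> space (borel_of TT)" using astar_K space_borel_of_TT by simp
  have P0_in: "P0 \<in> plan_lotteries A \<zeta> p x0"
    unfolding plan_lotteries_def P0_def using prob_space_return[OF astar_sp] space_borel_of_TT by simp
  have P0_cons: "lottery_constraints \<pi> \<beta> A \<zeta> I g gbar x0 P0"
    unfolding cons_eq
  proof (intro ballI allI impI)
    fix hs :: "'s list" and as i assume hs: "hs \<in> hists" and i: "i < I"
    have "(\<integral>a. cf hs as i a \<partial>P0) = cf hs as i astar"
      unfolding P0_def by (rule integral_return[OF astar_sp fuc_meas[OF fc[OF hs i] space_borel_of_TT refl]])
    also have "\<dots> \<ge> 0" unfolding cf_def using astar_val[OF hs i] by simp
    finally show "(\<integral>a. cf hs as i a \<partial>P0) \<ge> 0" .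
  qed
  have P0F: "P0 \<in> Feas" using P0_in P0_cons by (simp add: Feas_def)

  have FeasD: "P \<in> plan_lotteries A \<zeta> p x0" "lottery_constraints \<pi> \<beta> A \<zeta> I g gbar x0 P" if "P \<in> Feas" for P
    using that by (auto simp: Feas_def)
  have obj_le: "obj P \<le> Cu / (1 - \<beta>)" if "P \<in> Feas" for P
    unfolding obj_eq using integral_fuc_le[OF FeasD(1)[OF that] fo] fob by blast
  define S where "S = Sup (obj ` Feas)"
  have bdd: "bdd_above (obj ` Feas)"
    by (rule bdd_aboveI[where M="Cu / (1 - \<beta>)"]) (use obj_le in blast)
  have upper: "obj P \<le> S" if "P \<in> Feas" for P
    unfolding S_def using bdd that by (intro cSup_upper) auto
  have "\<exists>P. P \<in> Feas \<and> S - 1 / real (Suc n) < obj P" for n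
  proof -
    have "S - 1 / real (Suc n) < Sup (obj ` Feas)" unfolding S_def by simp
    moreover have "obj ` Feas \<noteq> {}" using P0F by blast
    ultimately obtain v where "v \<in> obj ` Feas" "S - 1 / real (Suc n) < v" by (rule less_cSupE)
    then show ?thesis by blast
  qed
  then obtain Ps where Ps: "\<And>n. Ps n \<in> Feas" "\<And>n. S - 1 / real (Suc n) < obj (Ps n)" by metis
  have Ps_pl: "Ps n \<in> plan_lotteries A \<zeta> p x0" for n using FeasD(1)[OF Ps(1)] .
  have objlim: "(\<lambda>n. obj (Ps n)) \<longlonglongrightarrow> S"
  proof (rule tendsto_sandwich[where f="\<lambda>n. S - 1 / real (Suc n)" and h="\<lambda>n. S"])
    show "\<forall>\<^sub>F n in sequentially. S - 1 / real (Suc n) \<le> obj (Ps n)"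
      by (rule always_eventually) (use Ps(2) less_imp_le in blast)
    show "\<forall>\<^sub>F n in sequentially. obj (Ps n) \<le> S"
      by (rule always_eventually) (use upper Ps(1) in blast)
    have "(\<lambda>n. S - inverse (real (Suc n))) \<longlonglongrightarrow> S - 0"
      by (intro tendsto_diff tendsto_const LIMSEQ_inverse_real_of_nat)
    then show "(\<lambda>n. S - 1 / real (Suc n)) \<longlonglongrightarrow> S" by (simp add: inverse_eq_divide)
    show "(\<lambda>n. S) \<longlonglongrightarrow> S" by simp
  qed

  \<comment> \<open>Helly selection\<close>
  define \<mu> where "\<mu> n = distr (Ps n) borel phi" for n
  have tight: "tight \<mu>"
    unfolding tight_def
  proof (intro conjI allI impI)
    fix n show "real_distribution (\<mu> n)" unfolding \<mu>_def by (rule mu_dist[OF Ps_pl])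
  next
    fix \<epsilon> :: real assume "\<epsilon> > 0"
    have "measure (\<mu> n) {-1<..1} = 1" for n
    proof -
      interpret prob_space "Ps n" using plan_lot_D(1)[OF Ps_pl] .
      have "measure (\<mu> n) {-1<..1} = measure (Ps n) (phi -` {-1<..1} \<inter> space (Ps n))"
        unfolding \<mu>_def by (rule measure_distr[OF phi_meas[OF plan_lot_D(2,3)[OF Ps_pl]]]) simp
      also have "phi -` {-1<..1} \<inter> space (Ps n) = space (Ps n)"
      proof -
        have "phi a \<in> {-1<..1}" for a using phi_range[of a] by simp
        then show ?thesis by blast
      qed
      finally show ?thesis using prob_space by simp
    qed
    then show "\<exists>a b. a < b \<and> (\<forall>n. 1 - \<epsilon> < measure (\<mu> n) {a<..b})"
      using \<open>\<epsilon> > 0\<close> by (intro exI[of _ "-1"] exI[of _ 1]) auto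
  qed
  obtain rr M where rr: "strict_mono rr" and M: "real_distribution M"
    and wc0: "weak_conv_m (\<mu> \<circ> id \<circ> rr) M"
    using tight_imp_convergent_subsubsequence[OF tight, of id] by (auto simp: strict_mono_def)
  have wc: "weak_conv_m (\<lambda>n. distr (Ps (rr n)) borel phi) M"
    using wc0 by (simp add: comp_def \<mu>_def)
  define Pstar where "Pstar = distr M (borel_of TT) psk"
  have Pstar_pl: "Pstar \<in> plan_lotteries A \<zeta> p x0" unfolding Pstar_def by (rule Pstar_in[OF M])
  have conv: "(\<lambda>n. \<integral>a. f a \<partial>Ps (rr n)) \<longlonglongrightarrow> (\<integral>a. f a \<partial>Pstar)"
    if "fuc f" "\<And>a. a \<in> K \<Longrightarrow> \<bar>f a\<bar> \<le> C" for f C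
    unfolding Pstar_def by (rule main_conv[OF Ps_pl M wc that])
  have Pstar_cons: "lottery_constraints \<pi> \<beta> A \<zeta> I g gbar x0 Pstar"
    unfolding cons_eq
  proof (intro ballI allI impI)
    fix hs :: "'s list" and as i assume hs: "hs \<in> hists" and i: "i < I" and "length as = length hs - 1" "set as \<subseteq> A"
    then have "(\<integral>a. cf hs as i a \<partial>Ps n) \<ge> 0" for n
      using FeasD(2)[OF Ps(1)[of n]] unfolding cons_eq by blast
    then show "(\<integral>a. cf hs as i a \<partial>Pstar) \<ge> 0"
    proof -
      assume nn: "\<And>n. (\<integral>a. cf hs as i a \<partial>Ps n) \<ge> 0"
      have "(\<lambda>n. \<integral>a. cf hs as i a \<partial>Ps (rr n)) \<longlonglongrightarrow> (\<integral>a. cf hs as i a \<partial>Pstar)"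
        by (rule conv[OF fc[OF hs i] fcb[OF hs i]])
      then show ?thesis by (rule LIMSEQ_le_const) (use nn in blast)
    qed
  qed
  have "(\<lambda>n. obj (Ps (rr n))) \<longlonglongrightarrow> obj Pstar"
    unfolding obj_eq by (rule conv[OF fo fob])
  moreover have "(\<lambda>n. obj (Ps (rr n))) \<longlonglongrightarrow> S"
    using LIMSEQ_subseq_LIMSEQ[OF objlim rr] by (simp add: comp_def)
  ultimately have objS: "obj Pstar = S" by (rule LIMSEQ_unique)
  show ?thesis
  proof (intro bexI conjI ballI impI)
    show "Pstar \<in> plan_lotteries A \<zeta> p x0" by (rule Pstar_pl)
    show "lottery_constraints \<pi> \<beta> A \<zeta> I g gbar x0 Pstar" by (rule Pstar_cons)
    fix P assume "P \<in> plan_lotteries A \<zeta> p x0" "lottery_constraints \<pi> \<beta> A \<zeta> I g gbar x0 P"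
    then have "P \<in> Feas" by (simp add: Feas_def)
    then have "obj P \<le> obj Pstar" using upper objS by simp
    then show "lottery_objective \<pi> \<beta> \<zeta> r I g \<gamma> x0 s0 P \<le> lottery_objective \<pi> \<beta> \<zeta> r I g \<gamma> x0 s0 Pstar"
      by (simp add: obj_def)
  qed
qed

end

theorem theorem4p3:
  fixes \<pi> :: "'s::finite \<Rightarrow> 's \<Rightarrow> real"
    and A :: "(real ^ 'n) set"
    and X :: "(real ^ 'm) set"
    and \<zeta> :: "real ^ 'm \<Rightarrow> real ^ 'n \<Rightarrow> 's \<Rightarrow> real ^ 'm"
    and p r :: "real ^ 'm \<Rightarrow> real ^ 'n \<Rightarrow> 's \<Rightarrow> real"
    and I :: nat
    and g :: "nat \<Rightarrow> real ^ 'm \<Rightarrow> real ^ 'n \<Rightarrow> 's \<Rightarrow> real"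
    and gbar \<gamma> :: "nat \<Rightarrow> real"
    and \<beta> :: real
    and x0 :: "real ^ 'm" and s0 :: 's
  assumes pi_pos: "\<And>s s'. \<pi> s s' > 0"
    and pi_sum: "\<And>s. (\<Sum>s'\<in>UNIV. \<pi> s s') = 1"
    and A_fin: "finite A"
    and X_countable: "countable X"
    and zeta_X: "\<And>x b s. x \<in> X \<Longrightarrow> b \<in> A \<Longrightarrow> \<zeta> x b s \<in> X"
    and r_bdd: "\<exists>B. \<forall>x\<in>X. \<forall>b\<in>A. \<forall>s. \<bar>r x b s\<bar> \<le> B"
    and g_bdd: "\<And>i. i < I \<Longrightarrow> \<exists>B. \<forall>x\<in>X. \<forall>b\<in>A. \<forall>s. \<bar>g i x b s\<bar> \<le> B"
    and beta: "0 < \<beta>" "\<beta> < 1"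
    and standing: "\<And>x s. x \<in> X \<Longrightarrow> \<exists>a. feasible_plan \<pi> \<beta> A \<zeta> p I g gbar x s a"
    and x0_X: "x0 \<in> X"
  shows "\<exists>Pstar \<in> plan_lotteries A \<zeta> p x0.
           lottery_constraints \<pi> \<beta> A \<zeta> I g gbar x0 Pstar \<and>
           (\<forall>P \<in> plan_lotteries A \<zeta> p x0. lottery_constraints \<pi> \<beta> A \<zeta> I g gbar x0 P \<longrightarrow>
              lottery_objective \<pi> \<beta> \<zeta> r I g \<gamma> x0 s0 P
                \<le> lottery_objective \<pi> \<beta> \<zeta> r I g \<gamma> x0 s0 Pstar)"
proof -
  interpret L: lot \<pi> \<beta> A X \<zeta> p x0
  proof
    show "\<And>s s'. \<pi> s s' > 0" by (rule pi_pos)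
    show "\<And>s. (\<Sum>s'\<in>UNIV. \<pi> s s') = 1" by (rule pi_sum)
    show "finite A" by (rule A_fin)
    show "\<And>x b s. x \<in> X \<Longrightarrow> b \<in> A \<Longrightarrow> \<zeta> x b s \<in> X" by (rule zeta_X)
    show "0 < \<beta>" "\<beta> < 1" by (rule beta(1), rule beta(2))
    show "x0 \<in> X" by (rule x0_X)
    fix x s assume "x \<in> X"
    then obtain a where a: "feasible_plan \<pi> \<beta> A \<zeta> p I g gbar x s a" using standing by blast
    have "[s] \<in> hists" by (simp add: hists_def)
    then have "a [s] \<in> Atil A p (xpath \<zeta> x a [s]) (last [s])"
      using a unfolding feasible_plan_def Atil_inf_def by blast
    then have "a [s] \<in> Atil A p x s" by (simp add: xpath_def)
    then show "Atil A p x s \<noteq> {}" by blast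
  qed
  show ?thesis
    by (rule L.exists_max[OF r_bdd g_bdd standing[OF x0_X]])
qed

end
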